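(* Let $n\ge1$, $K>0$, $\beta>0$ and $\mu>0$. Suppose that \[ \|u\|_2^2 \leq \frac{1}{K^2}\|\nabla u\|_2^2 + \mu \qquad\text{for all } u\in {\rm H}^1(\mathbb{R}^n) \text{ with } \|u\|_2^2=\beta . \] Then for every $u\in {\rm H}^1(\mathbb{R}^n)$ with $\|u\|_2^2=\beta$, \[ \mu \;\geq\; \int_{\{\xi:\,|\xi|\leq K\}} |\widehat{u}(\xi)|^2\, {\rm d}\xi . \]
   Context: $\|\cdot\|_2$ is the ${\rm L}^2(\mathbb{R}^n)$ norm. The Fourier transform is $\widehat v(\xi) = (2\pi)^{-n}\int_{\mathbb{R}^n} e^{-{\rm i}x\cdot\xi} v(x)\,{\rm d}x$. *)

theory Defs
  imports "HOL-Analysis.Analysis"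
begin

text \<open>Functions on R^n are modelled as functions on an arbitrary Euclidean space 'a,
  with n = DIM('a) >= 1, equipped with Lebesgue (Borel) measure lborel.\<close>

definition square_integrable :: "('a::euclidean_space \<Rightarrow> complex) \<Rightarrow> bool" where
  "square_integrable f \<longleftrightarrow> f \<in> borel_measurable lborel \<and>
     integrable lborel (\<lambda>x. (cmod (f x))^2)"

definition l2norm_sq :: "('a::euclidean_space \<Rightarrow> complex) \<Rightarrow> real" where
  "l2norm_sq f = (LINT x|lborel. (cmod (f x))^2)"

definition test_fun :: "('a::euclidean_space \<Rightarrow> real) \<Rightarrow> bool" where
  "test_fun \<phi> \<longleftrightarrow> (\<forall>x. \<phi> differentiable (at x)) \<and>
     (\<forall>b\<in>Basis. continuous_on UNIV (\<lambda>x. frechet_derivative \<phi> (at x) b)) \<and>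
     bounded {x. \<phi> x \<noteq> 0}"

definition weak_deriv :: "('a::euclidean_space \<Rightarrow> complex) \<Rightarrow> 'a \<Rightarrow> ('a \<Rightarrow> complex) \<Rightarrow> bool" where
  "weak_deriv u b g \<longleftrightarrow> (\<forall>\<phi>. test_fun \<phi> \<longrightarrow>
     (LINT x|lborel. u x * of_real (frechet_derivative \<phi> (at x) b)) =
     - (LINT x|lborel. g x * of_real (\<phi> x)))"

definition H1 :: "('a::euclidean_space \<Rightarrow> complex) \<Rightarrow> bool" where
  "H1 u \<longleftrightarrow> square_integrable u \<and>
     (\<forall>b\<in>Basis. \<exists>g. square_integrable g \<and> weak_deriv u b g)"

definition weak_partial :: "('a::euclidean_space \<Rightarrow> complex) \<Rightarrow> 'a \<Rightarrow> ('a \<Rightarrow> complex)" where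
  "weak_partial u b = (SOME g. square_integrable g \<and> weak_deriv u b g)"

text \<open>Squared L^2 norm of the gradient (well defined: weak derivatives are unique a.e.).\<close>
definition grad_norm_sq :: "('a::euclidean_space \<Rightarrow> complex) \<Rightarrow> real" where
  "grad_norm_sq u = (\<Sum>b\<in>Basis. l2norm_sq (weak_partial u b))"

definition fourier_L1 :: "('a::euclidean_space \<Rightarrow> complex) \<Rightarrow> 'a \<Rightarrow> complex" where
  "fourier_L1 v \<xi> = of_real ((2 * pi) powr (- real DIM('a))) *
     (LINT x|lborel. exp (- \<i> * of_real (x \<bullet> \<xi>)) * v x)"

text \<open>v is the (L^2, Plancherel) Fourier transform of the L^2 function u: v is in L^2 and
  satisfies the duality relation with every integrable, square-integrable function,
  which determines v a.e. and extends the integral formula.\<close>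
definition is_fourier_L2 :: "('a::euclidean_space \<Rightarrow> complex) \<Rightarrow> ('a \<Rightarrow> complex) \<Rightarrow> bool" where
  "is_fourier_L2 u v \<longleftrightarrow> square_integrable v \<and>
     (\<forall>\<phi>. integrable lborel \<phi> \<and> square_integrable \<phi> \<longrightarrow>
        (LINT \<xi>|lborel. v \<xi> * \<phi> \<xi>) = (LINT x|lborel. u x * fourier_L1 \<phi> x))"

end

theory Submission
  imports Defs "HOL-Probability.Characteristic_Functions"
begin


lemma deriv_tabs: "((\<lambda>t::real. t * \<bar>t\<bar>) has_real_derivative 2 * \<bar>x\<bar>) (at x)"
proof (cases "x = 0")
  case True
  have "((\<lambda>h. ((h * \<bar>h\<bar>) - (0 * \<bar>0\<bar>)) / h) \<longlongrightarrow> (0::real)) (at 0)"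
  proof -
    have "((\<lambda>h::real. \<bar>h\<bar>) \<longlongrightarrow> 0) (at 0)"
      using tendsto_rabs[OF tendsto_ident_at[of 0 UNIV]] by simp
    then show ?thesis
      by (rule Lim_transform_eventually) (auto simp: eventually_at_filter)
  qed
  then show ?thesis using True by (simp add: has_field_derivative_iff)
next
  case False
  show ?thesis
  proof (cases "x > 0")
    case True
    have "((\<lambda>t::real. t * t) has_real_derivative 2 * \<bar>x\<bar>) (at x)"
      using True by (auto intro!: derivative_eq_intros)
    then show ?thesis
      by (rule has_field_derivative_transform_within_open[where S="{0<..}"]) (use True in auto)
  next
    case False': False
    then have "x < 0" using False by auto
    have "((\<lambda>t::real. - (t * t)) has_real_derivative 2 * \<bar>x\<bar>) (at x)"
      using \<open>x<0\<close> by (auto intro!: derivative_eq_intros)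
    then show ?thesis
      by (rule has_field_derivative_transform_within_open[where S="{..<0}"]) (use \<open>x<0\<close> in auto)
  qed
qed

definition pp :: "real \<Rightarrow> real" where "pp t = (t * \<bar>t\<bar> + t * t) / 2"
definition ppd :: "real \<Rightarrow> real" where "ppd t = \<bar>t\<bar> + t"

lemma pp_deriv: "(pp has_real_derivative ppd x) (at x)"
  unfolding pp_def[abs_def] ppd_def
  by (rule derivative_eq_intros deriv_tabs refl | simp)+

lemma pp_eq: "pp t = (if t \<le> 0 then 0 else t * t)" by (simp add: pp_def)
lemma ppd_eq: "ppd t = (if t \<le> 0 then 0 else 2 * t)" by (simp add: ppd_def)

definition ramp :: "real \<Rightarrow> real" where
  "ramp t = 2 * pp t - 4 * pp (t - 1/2) + 2 * pp (t - 1)"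
definition rampd :: "real \<Rightarrow> real" where
  "rampd t = 2 * ppd t - 4 * ppd (t - 1/2) + 2 * ppd (t - 1)"

lemma ramp_deriv: "(ramp has_real_derivative rampd x) (at x)"
  unfolding ramp_def[abs_def] rampd_def
  by (rule derivative_eq_intros pp_deriv[THEN DERIV_chain2] refl | simp)+

lemma ramp_le0: "t \<le> 0 \<Longrightarrow> ramp t = 0" by (simp add: ramp_def pp_eq)
lemma ramp_ge1: "t \<ge> 1 \<Longrightarrow> ramp t = 1" by (simp add: ramp_def pp_eq algebra_simps)
lemma ramp_bounds: "0 \<le> ramp t \<and> ramp t \<le> 1"
proof -
  consider "t \<le> 0" | "0 < t" "t \<le> 1/2" | "1/2 < t" "t \<le> 1" | "t > 1" by linarith
  then show ?thesis
  proof cases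
    case 1 then show ?thesis by (simp add: ramp_le0)
  next
    case 2
    have "t * t \<le> (1/2) * (1/2)" using 2 by (intro mult_mono) auto
    then show ?thesis using 2 by (simp add: ramp_def pp_eq)
  next
    case 3
    have "(1-t) * (1-t) \<le> (1/2) * (1/2)" using 3 by (intro mult_mono) auto
    moreover have "ramp t = 1 - 2 * ((1-t)*(1-t))" using 3 by (simp add: ramp_def pp_eq algebra_simps)
    ultimately show ?thesis by simp
  next
    case 4 then show ?thesis by (simp add: ramp_ge1)
  qed
qed
lemma ramp_nonneg: "ramp t \<ge> 0" using ramp_bounds by blast
lemma ramp_le1: "ramp t \<le> 1" using ramp_bounds by blast

lemma continuous_ramp: "continuous_on UNIV ramp"
  unfolding ramp_def pp_def by (intro continuous_intros) auto
lemma continuous_rampd: "continuous_on UNIV rampd"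
  unfolding rampd_def ppd_def by (intro continuous_intros) auto


lemma continuous_on_ramp_comp[continuous_intros]:
  "continuous_on S g \<Longrightarrow> continuous_on S (\<lambda>x. ramp (g x))"
  using continuous_on_compose2[OF continuous_ramp] by blast
lemma continuous_on_rampd_comp[continuous_intros]:
  "continuous_on S g \<Longrightarrow> continuous_on S (\<lambda>x. rampd (g x))"
  using continuous_on_compose2[OF continuous_rampd] by blast

definition bfac :: "real \<Rightarrow> 'a::euclidean_space \<Rightarrow> 'a \<Rightarrow> 'a \<Rightarrow> 'a \<Rightarrow> real" where
  "bfac k l u i x = ramp (k * (x \<bullet> i - l \<bullet> i)) * ramp (k * (u \<bullet> i - x \<bullet> i))"
definition bfacd :: "real \<Rightarrow> 'a::euclidean_space \<Rightarrow> 'a \<Rightarrow> 'a \<Rightarrow> 'a \<Rightarrow> 'a \<Rightarrow> real" where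
  "bfacd k l u i x v = (k * (v \<bullet> i) * rampd (k * (x \<bullet> i - l \<bullet> i))) * ramp (k * (u \<bullet> i - x \<bullet> i))
     + ramp (k * (x \<bullet> i - l \<bullet> i)) * (- k * (v \<bullet> i) * rampd (k * (u \<bullet> i - x \<bullet> i)))"

definition bump :: "real \<Rightarrow> 'a::euclidean_space \<Rightarrow> 'a \<Rightarrow> 'a \<Rightarrow> real" where
  "bump k l u x = (\<Prod>i\<in>Basis. bfac k l u i x)"

lemma bfac_deriv: "(bfac k l u i has_derivative bfacd k l u i x) (at x)"
proof -
  have "((\<lambda>x. ramp (k * (x \<bullet> i - l \<bullet> i)) * ramp (k * (u \<bullet> i - x \<bullet> i))) has_derivative
     (\<lambda>v. (k * (v \<bullet> i) * rampd (k * (x \<bullet> i - l \<bullet> i))) * ramp (k * (u \<bullet> i - x \<bullet> i))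
     + ramp (k * (x \<bullet> i - l \<bullet> i)) * (- k * (v \<bullet> i) * rampd (k * (u \<bullet> i - x \<bullet> i))))) (at x)"
    apply (rule has_derivative_eq_rhs)
     apply (rule has_derivative_mult)
      apply (rule DERIV_compose_FDERIV[OF ramp_deriv])
      apply (rule derivative_eq_intros refl)+
     apply (rule DERIV_compose_FDERIV[OF ramp_deriv])
     apply (rule derivative_eq_intros refl)+
    apply (simp add: fun_eq_iff algebra_simps inner_simps)
    done
  then show ?thesis unfolding bfac_def[abs_def] bfacd_def[abs_def] .
qed

lemma bump_deriv: "(bump k l u has_derivative
   (\<lambda>v. \<Sum>i\<in>Basis. bfacd k l u i x v * (\<Prod>j\<in>Basis - {i}. bfac k l u j x))) (at x)"
  unfolding bump_def[abs_def]
  by (rule has_derivative_prod[where f="\<lambda>i. bfac k l u i", OF bfac_deriv])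

lemma continuous_bfac[continuous_intros]: "continuous_on S (bfac k l u i)"
  unfolding bfac_def[abs_def] by (intro continuous_intros)
lemma continuous_bfacd: "continuous_on S (\<lambda>x. bfacd k l u i x v)"
  unfolding bfacd_def[abs_def] by (intro continuous_intros)

lemma bump_zero: "x \<notin> box l u \<Longrightarrow> k > 0 \<Longrightarrow> bump k l u x = 0"
proof -
  assume "x \<notin> box l u" "k > 0"
  then obtain i where i: "i \<in> Basis" "x \<bullet> i \<le> l \<bullet> i \<or> u \<bullet> i \<le> x \<bullet> i"
    by (auto simp: mem_box not_less)
  then have "bfac k l u i x = 0" using \<open>k>0\<close>
    by (auto simp: bfac_def ramp_le0 mult_nonneg_nonpos)
  then show ?thesis using i unfolding bump_def
    by (metis finite_Basis prod_zero_iff)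
qed

lemma bump_bounds: "0 \<le> bump k l u x \<and> bump k l u x \<le> 1"
  unfolding bump_def
  by (intro conjI prod_nonneg prod_le_1) (auto simp: bfac_def ramp_bounds mult_le_one)

lemma test_fun_bump: "k > 0 \<Longrightarrow> test_fun (bump k l u)"
  unfolding test_fun_def
proof (intro conjI ballI allI)
  fix x show "bump k l u differentiable at x" using bump_deriv differentiable_def by blast
next
  fix b :: 'a assume "b \<in> Basis"
  have "(\<lambda>x. frechet_derivative (bump k l u) (at x) b) =
     (\<lambda>x. \<Sum>i\<in>Basis. bfacd k l u i x b * (\<Prod>j\<in>Basis - {i}. bfac k l u j x))"
  proof (rule ext)
    fix x show "frechet_derivative (bump k l u) (at x) b = (\<Sum>i\<in>Basis. bfacd k l u i x b * (\<Prod>j\<in>Basis - {i}. bfac k l u j x))"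
      using fun_cong[OF frechet_derivative_at[OF bump_deriv[of k l u x]], of b] by simp
  qed
  moreover have "continuous_on UNIV (\<lambda>x. \<Sum>i\<in>Basis. bfacd k l u i x b * (\<Prod>j\<in>Basis - {i}. bfac k l u j x))"
    by (intro continuous_intros continuous_bfacd)
  ultimately show "continuous_on UNIV (\<lambda>x. frechet_derivative (bump k l u) (at x) b)" by (simp only:)
next
  assume "k > 0"
  then have "{x. bump k l u x \<noteq> 0} \<subseteq> cbox l u" using bump_zero box_subset_cbox by blast
  then show "bounded {x. bump k l u x \<noteq> 0}" using bounded_cbox bounded_subset by blast
qed

lemma bump_lim: "(\<lambda>n. bump (real (Suc n)) l u x) \<longlonglongrightarrow> indicator (box l u) x"
proof (cases "x \<in> box l u")
  case False
  then show ?thesis by (simp add: bump_zero)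
next
  case True
  define d where "d = Min ((\<lambda>i. min (x \<bullet> i - l \<bullet> i) (u \<bullet> i - x \<bullet> i)) ` Basis)"
  have d: "d > 0" using True unfolding d_def by (auto simp: mem_box)
  have dle: "d \<le> x \<bullet> i - l \<bullet> i" "d \<le> u \<bullet> i - x \<bullet> i" if "i \<in> Basis" for i
  proof -
    have "d \<le> min (x \<bullet> i - l \<bullet> i) (u \<bullet> i - x \<bullet> i)"
      unfolding d_def by (rule Min_le) (use that in auto)
    then show "d \<le> x \<bullet> i - l \<bullet> i" "d \<le> u \<bullet> i - x \<bullet> i" by auto
  qed
  obtain N where N: "real N > 1 / d" using reals_Archimedean2 by blast
  have "bump (real (Suc n)) l u x = 1" if "n \<ge> N" for n
  proof -
    have "1 / d < real (Suc n)" using N that by (simp add: less_le_trans)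
    then have k1: "real (Suc n) * d \<ge> 1" using d by (simp add: divide_less_eq)
    have "bfac (real (Suc n)) l u i x = 1" if "i \<in> Basis" for i
    proof -
      have "real (Suc n) * d \<le> real (Suc n) * (x \<bullet> i - l \<bullet> i)"
           "real (Suc n) * d \<le> real (Suc n) * (u \<bullet> i - x \<bullet> i)"
        using dle[OF that] by (simp_all add: mult_left_mono)
      then have "ramp (real (Suc n) * (x \<bullet> i - l \<bullet> i)) = 1" "ramp (real (Suc n) * (u \<bullet> i - x \<bullet> i)) = 1"
        using k1 by (intro ramp_ge1; linarith)+
      then show ?thesis unfolding bfac_def by simp
    qed
    then show ?thesis unfolding bump_def by simp
  qed
  then show ?thesis using True
    by (intro tendsto_eventually) (auto simp: eventually_sequentially)
qed


lemma sq_int_meas: "square_integrable h \<Longrightarrow> h \<in> borel_measurable borel"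
  by (simp add: square_integrable_def)

lemma le_1_sq: "(c::real) \<le> 1 + c^2"
proof -
  have "0 \<le> (c - 1)^2" by simp
  then have "2 * c \<le> 1 + c^2" by (simp add: power2_eq_square algebra_simps)
  moreover have "0 \<le> c^2" by simp
  ultimately show ?thesis by linarith
qed

lemma sq_int_loc:
  assumes h: "square_integrable h" and S: "S \<in> sets lborel" "emeasure lborel S < \<infinity>"
  shows "integrable lborel (\<lambda>x. indicator S x * cmod (h x))"
proof (rule Bochner_Integration.integrable_bound)
  have hm: "h \<in> borel_measurable borel" using h by (simp add: square_integrable_def)
  have "integrable lborel (\<lambda>x. indicator S x * (1::real))"
    using S by (simp add: integrable_indicator_iff less_top[symmetric] ac_simps)
  moreover have "integrable lborel (\<lambda>x. (cmod (h x))^2)" using h by (simp add: square_integrable_def)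
  ultimately show "integrable lborel (\<lambda>x. indicator S x * 1 + (cmod (h x))^2)" by auto
  show "(\<lambda>x. indicator S x * cmod (h x)) \<in> borel_measurable lborel" using hm S by measurable
  show "AE x in lborel. norm (indicator S x * cmod (h x)) \<le> norm (indicator S x * 1 + (cmod (h x))^2)"
  proof (intro AE_I2)
    fix x
    have "cmod (h x) \<le> 1 + (cmod (h x))^2" by (rule le_1_sq)
    then show "norm (indicator S x * cmod (h x)) \<le> norm (indicator S x * 1 + (cmod (h x))^2)"
      by (auto simp: indicator_def)
  qed
qed

lemma test_fun_cont: "test_fun \<phi> \<Longrightarrow> continuous_on UNIV \<phi>"
  unfolding test_fun_def
  by (meson continuous_at_imp_continuous_on differentiable_imp_continuous_within)

lemma test_fun_bound:
  assumes "test_fun \<phi>"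
  obtains M R where "M \<ge> 0" "\<And>x. \<bar>\<phi> x\<bar> \<le> M" "\<And>x. \<phi> x \<noteq> 0 \<Longrightarrow> x \<in> cball 0 R"
proof -
  have c: "continuous_on UNIV \<phi>" using assms by (rule test_fun_cont)
  obtain R where R: "{x. \<phi> x \<noteq> 0} \<subseteq> cball 0 R"
  proof -
    obtain R where "\<forall>x\<in>{x. \<phi> x \<noteq> 0}. norm x \<le> R" using assms unfolding test_fun_def bounded_iff by blast
    then have "{x. \<phi> x \<noteq> 0} \<subseteq> cball 0 R" by (auto simp: dist_norm)
    then show ?thesis using that by blast
  qed
  have "compact (\<phi> ` cball 0 R)"
    by (rule compact_continuous_image) (auto intro: continuous_on_subset[OF c])
  then obtain M where M: "\<And>y. y \<in> \<phi> ` cball 0 R \<Longrightarrow> norm y \<le> M"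
    using compact_imp_bounded bounded_iff by metis
  have bnd: "\<bar>\<phi> x\<bar> \<le> max 0 M" for x
  proof (cases "\<phi> x = 0")
    case False then have "x \<in> cball 0 R" using R by auto
    then show ?thesis using M[of "\<phi> x"] by auto
  qed simp
  show ?thesis by (rule that[of "max 0 M" R]) (use bnd R in auto)
qed

lemma test_fun_meas: "test_fun \<phi> \<Longrightarrow> \<phi> \<in> borel_measurable borel"
  by (intro borel_measurable_continuous_onI test_fun_cont)

lemma test_integrable:
  assumes h: "square_integrable h" and \<phi>: "test_fun \<phi>"
  shows "integrable lborel (\<lambda>x. h x * of_real (\<phi> x))"
proof -
  obtain M R where MR: "M \<ge> 0" "\<And>x. \<bar>\<phi> x\<bar> \<le> M" "\<And>x. \<phi> x \<noteq> 0 \<Longrightarrow> x \<in> cball 0 R"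
    using test_fun_bound[OF \<phi>] by blast
  have "integrable lborel (\<lambda>x. indicator (cball 0 R) x * cmod (h x))"
    by (rule sq_int_loc[OF h]) (use emeasure_bounded_finite[of "cball 0 R"] in auto)
  then have i: "integrable lborel (\<lambda>x. M * (indicator (cball 0 R) x * cmod (h x)))" by simp
  show ?thesis
  proof (rule Bochner_Integration.integrable_bound[OF i])
    show "(\<lambda>x. h x * complex_of_real (\<phi> x)) \<in> borel_measurable lborel"
      using sq_int_meas[OF h] test_fun_meas[OF \<phi>] by measurable
    show "AE x in lborel. norm (h x * complex_of_real (\<phi> x)) \<le> norm (M * (indicator (cball 0 R) x * cmod (h x)))"
    proof (intro AE_I2)
      fix x show "norm (h x * complex_of_real (\<phi> x)) \<le> norm (M * (indicator (cball 0 R) x * cmod (h x)))"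
      proof (cases "\<phi> x = 0")
        case False
        then have "x \<in> cball 0 R" using MR by auto
        then show ?thesis using MR(1) MR(2)[of x] mult_right_mono[OF MR(2)[of x] norm_ge_zero[of "h x"]] by (simp add: norm_mult mult.commute)
      qed simp
    qed
  qed
qed

lemma box_integral_zero:
  assumes h: "square_integrable h" and z: "\<And>\<phi>. test_fun \<phi> \<Longrightarrow> (LINT x|lborel. h x * of_real (\<phi> x)) = 0"
  shows "(LINT x|lborel. h x * indicator (box l u) x) = 0"
proof -
  have hm: "h \<in> borel_measurable borel" using h by (simp add: square_integrable_def)
  have lim: "(\<lambda>n. LINT x|lborel. h x * of_real (bump (real (Suc n)) l u x)) \<longlonglongrightarrow> (LINT x|lborel. h x * indicator (box l u) x)"
  proof (rule integral_dominated_convergence[where w="\<lambda>x. indicator (cbox l u) x * cmod (h x)"])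
    show "(\<lambda>x. h x * indicator (box l u) x) \<in> borel_measurable lborel" using hm by measurable
    show "(\<lambda>x. h x * of_real (bump (real (Suc n)) l u x)) \<in> borel_measurable lborel" for n
      using hm test_fun_meas[OF test_fun_bump[of "real (Suc n)" l u]] by measurable
    show "integrable lborel (\<lambda>x. indicator (cbox l u) x * cmod (h x))"
      by (rule sq_int_loc[OF h]) (use emeasure_bounded_finite[of "cbox l u"] in auto)
    show "AE x in lborel. (\<lambda>n. h x * of_real (bump (real (Suc n)) l u x)) \<longlonglongrightarrow> h x * indicator (box l u) x"
    proof (intro AE_I2)
      fix x
      have "(\<lambda>n. of_real (bump (real (Suc n)) l u x) :: complex) \<longlonglongrightarrow> of_real (indicator (box l u) x)"
        by (intro tendsto_of_real bump_lim)
      then have "(\<lambda>n. h x * of_real (bump (real (Suc n)) l u x)) \<longlonglongrightarrow> h x * of_real (indicator (box l u) x)"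
        by (intro tendsto_mult tendsto_const)
      moreover have "complex_of_real (indicator (box l u) x) = indicator (box l u) x" by (simp add: indicator_def)
      ultimately show "(\<lambda>n. h x * of_real (bump (real (Suc n)) l u x)) \<longlonglongrightarrow> h x * indicator (box l u) x"
        by simp
    qed
    show "AE x in lborel. norm (h x * of_real (bump (real (Suc n)) l u x)) \<le> indicator (cbox l u) x * cmod (h x)" for n
    proof (intro AE_I2)
      fix x
      show "norm (h x * of_real (bump (real (Suc n)) l u x)) \<le> indicator (cbox l u) x * cmod (h x)"
      proof (cases "x \<in> box l u")
        case True
        then have "x \<in> cbox l u" using box_subset_cbox by blast
        then show ?thesis using bump_bounds[of "real (Suc n)" l u x]
          by (simp add: norm_mult mult_left_le)
      next
        case False then show ?thesis by (simp add: bump_zero)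
      qed
    qed
  qed
  have "(\<lambda>n. LINT x|lborel. h x * of_real (bump (real (Suc n)) l u x)) = (\<lambda>n. 0)"
  proof (rule ext)
    fix n show "(LINT x|lborel. h x * of_real (bump (real (Suc n)) l u x)) = 0"
      by (rule z[OF test_fun_bump]) simp
  qed
  with lim show ?thesis using LIMSEQ_unique tendsto_const by metis
qed


lemma FL_real:
  fixes r :: "'a::euclidean_space \<Rightarrow> real"
  assumes rm[measurable]: "r \<in> borel_measurable borel"
    and int: "\<And>l u. integrable lborel (\<lambda>x. indicator (box l u) x * r x)"
    and z: "\<And>l u. (LINT x|lborel. indicator (box l u) x * r x) = 0"
  shows "AE x in lborel. r x = 0"
proof -
  define P where "P x = ennreal (max 0 (r x))" for x
  define N where "N x = ennreal (max 0 (- r x))" for x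
  have [measurable]: "P \<in> borel_measurable borel" "N \<in> borel_measurable borel"
    unfolding P_def[abs_def] N_def[abs_def] by measurable
  have box_eq: "emeasure (density lborel P) (box l u) = ennreal (LINT x|lborel. indicator (box l u) x * max 0 (r x))
     \<and> emeasure (density lborel N) (box l u) = ennreal (LINT x|lborel. indicator (box l u) x * max 0 (- r x))
     \<and> (LINT x|lborel. indicator (box l u) x * max 0 (r x)) = (LINT x|lborel. indicator (box l u) x * max 0 (- r x))"
    for l u
  proof -
    have ip: "integrable lborel (\<lambda>x. indicator (box l u) x * max 0 (r x))"
      by (rule Bochner_Integration.integrable_bound[OF int[of l u]]) (auto simp: indicator_def)
    have inn: "integrable lborel (\<lambda>x. indicator (box l u) x * max 0 (- r x))"
      by (rule Bochner_Integration.integrable_bound[OF int[of l u]]) (auto simp: indicator_def)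
    have "emeasure (density lborel P) (box l u) = (\<integral>\<^sup>+x. ennreal (indicator (box l u) x * max 0 (r x)) \<partial>lborel)"
      by (subst emeasure_density) (auto simp: P_def indicator_def intro!: nn_integral_cong)
    also have "\<dots> = ennreal (LINT x|lborel. indicator (box l u) x * max 0 (r x))"
      by (rule nn_integral_eq_integral[OF ip]) auto
    finally have 1: "emeasure (density lborel P) (box l u) = ennreal (LINT x|lborel. indicator (box l u) x * max 0 (r x))" .
    have "emeasure (density lborel N) (box l u) = (\<integral>\<^sup>+x. ennreal (indicator (box l u) x * max 0 (- r x)) \<partial>lborel)"
      by (subst emeasure_density) (auto simp: N_def indicator_def intro!: nn_integral_cong)
    also have "\<dots> = ennreal (LINT x|lborel. indicator (box l u) x * max 0 (- r x))"
      by (rule nn_integral_eq_integral[OF inn]) auto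
    finally have 2: "emeasure (density lborel N) (box l u) = ennreal (LINT x|lborel. indicator (box l u) x * max 0 (- r x))" .
    have "(LINT x|lborel. indicator (box l u) x * max 0 (r x)) - (LINT x|lborel. indicator (box l u) x * max 0 (- r x))
        = (LINT x|lborel. indicator (box l u) x * max 0 (r x) - indicator (box l u) x * max 0 (- r x))"
      using ip inn by simp
    also have "\<dots> = (LINT x|lborel. indicator (box l u) x * r x)"
      by (rule Bochner_Integration.integral_cong) (auto simp: indicator_def)
    finally have 3: "(LINT x|lborel. indicator (box l u) x * max 0 (r x)) = (LINT x|lborel. indicator (box l u) x * max 0 (- r x))"
      using z[of l u] by simp
    show ?thesis using 1 2 3 by simp
  qed
  have dens: "density lborel P = density lborel N"
  proof (rule measure_eqI_generator_eq)
    let ?E = "range (\<lambda>(a, b). box a b::'a set)"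
    show "Int_stable ?E"
      by (auto simp: Int_stable_def box_Int_box)
    show "?E \<subseteq> Pow UNIV" "sets (density lborel P) = sigma_sets UNIV ?E" "sets (density lborel N) = sigma_sets UNIV ?E"
      by (simp_all add: borel_eq_box)
    let ?A = "\<lambda>n::nat. box (- (real n *\<^sub>R One)) (real n *\<^sub>R One) :: 'a set"
    show "range ?A \<subseteq> ?E" "(\<Union>i. ?A i) = UNIV"
      unfolding UN_box_eq_UNIV by auto
    show "emeasure (density lborel P) (?A i) \<noteq> \<infinity>" for i
      using box_eq[of "- (real i *\<^sub>R One)" "real i *\<^sub>R One"] by simp
    show "emeasure (density lborel P) X = emeasure (density lborel N) X" if "X \<in> ?E" for X
      using that box_eq by auto
  qed
  have "AE x in lborel. P x = N x"
    by (rule sigma_finite_measure.density_unique[OF sigma_finite_lborel _ _ dens]) auto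
  then show ?thesis
  proof (rule AE_mp, intro AE_I2 impI)
    fix x assume "P x = N x"
    then have "max 0 (r x) = max 0 (- r x)" unfolding P_def N_def
      by (simp add: ennreal_inj)
    then show "r x = 0" by (auto simp: max_def split: if_splits)
  qed
qed

lemma FL:
  assumes h: "square_integrable h" and z: "\<And>\<phi>. test_fun \<phi> \<Longrightarrow> (LINT x|lborel. h x * of_real (\<phi> x)) = 0"
  shows "AE x in lborel. h x = 0"
proof -
  have hm[measurable]: "h \<in> borel_measurable borel" using h by (simp add: square_integrable_def)
  have ib: "integrable lborel (\<lambda>x. h x * indicator (box l u) x)" for l u
  proof (rule Bochner_Integration.integrable_bound[OF sq_int_loc[OF h, of "box l u"]])
    show "box l u \<in> sets lborel" by simp
    show "emeasure lborel (box l u) < \<infinity>" using emeasure_bounded_finite[of "box l u"] by simp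
    show "(\<lambda>x. h x * indicator (box l u) x) \<in> borel_measurable lborel" by measurable
    show "AE x in lborel. norm (h x * indicator (box l u) x) \<le> norm (indicator (box l u) x * cmod (h x))"
      by (auto simp: indicator_def)
  qed
  have bz: "(LINT x|lborel. h x * indicator (box l u) x) = 0" for l u
    by (rule box_integral_zero[OF h z])
  have "AE x in lborel. Re (h x) = 0"
  proof (rule FL_real)
    show "(\<lambda>x. Re (h x)) \<in> borel_measurable borel" by measurable
    fix l u
    have e: "(\<lambda>x. indicator (box l u) x * Re (h x)) = (\<lambda>x. Re (h x * indicator (box l u) x))"
      by (auto simp: indicator_def)
    show "integrable lborel (\<lambda>x. indicator (box l u) x * Re (h x))"
      unfolding e by (rule integrable_Re[OF ib])
    show "(LINT x|lborel. indicator (box l u) x * Re (h x)) = 0"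
      unfolding e using integral_Re[OF ib[of l u]] bz[of l u] by (simp only:) simp
  qed
  moreover have "AE x in lborel. Im (h x) = 0"
  proof (rule FL_real)
    show "(\<lambda>x. Im (h x)) \<in> borel_measurable borel" by measurable
    fix l u
    have e: "(\<lambda>x. indicator (box l u) x * Im (h x)) = (\<lambda>x. Im (h x * indicator (box l u) x))"
      by (auto simp: indicator_def)
    show "integrable lborel (\<lambda>x. indicator (box l u) x * Im (h x))"
      unfolding e by (rule integrable_Im[OF ib])
    show "(LINT x|lborel. indicator (box l u) x * Im (h x)) = 0"
      unfolding e using integral_Im[OF ib[of l u]] bz[of l u] by (simp only:) simp
  qed
  ultimately show ?thesis by eventually_elim (simp add: complex_eq_iff)
qed

lemma sq_int_diff:
  assumes f: "square_integrable f" and g: "square_integrable g"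
  shows "square_integrable (\<lambda>x. f x - g x)"
  unfolding square_integrable_def
proof
  have [measurable]: "f \<in> borel_measurable borel" "g \<in> borel_measurable borel"
    using f g by (auto simp: square_integrable_def)
  show "(\<lambda>x. f x - g x) \<in> borel_measurable lborel" by measurable
  have "integrable lborel (\<lambda>x. 2 * (cmod (f x))^2 + 2 * (cmod (g x))^2)"
    using f g by (auto simp: square_integrable_def)
  then show "integrable lborel (\<lambda>x. (cmod (f x - g x))^2)"
  proof (rule Bochner_Integration.integrable_bound)
    show "(\<lambda>x. (cmod (f x - g x))\<^sup>2) \<in> borel_measurable lborel" by measurable
    show "AE x in lborel. norm ((cmod (f x - g x))\<^sup>2) \<le> norm (2 * (cmod (f x))\<^sup>2 + 2 * (cmod (g x))\<^sup>2)"
    proof (intro AE_I2)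
      fix x
      have "cmod (f x - g x) \<le> cmod (f x) + cmod (g x)" by (rule norm_triangle_ineq4)
      then have "(cmod (f x - g x))^2 \<le> (cmod (f x) + cmod (g x))^2" by (simp add: power_mono)
      also have "\<dots> \<le> 2 * (cmod (f x))\<^sup>2 + 2 * (cmod (g x))\<^sup>2"
        using zero_le_power2[of "cmod (f x) - cmod (g x)"] by (simp add: power2_eq_square algebra_simps)
      finally show "norm ((cmod (f x - g x))\<^sup>2) \<le> norm (2 * (cmod (f x))\<^sup>2 + 2 * (cmod (g x))\<^sup>2)" by simp
    qed
  qed
qed

lemma weak_deriv_unique:
  assumes g1: "square_integrable g1" and g2: "square_integrable g2"
    and w1: "weak_deriv u b g1" and w2: "weak_deriv u b g2"
  shows "AE x in lborel. g1 x = g2 x"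
proof -
  have "AE x in lborel. g1 x - g2 x = 0"
  proof (rule FL[OF sq_int_diff[OF g1 g2]])
    fix \<phi> :: "'a \<Rightarrow> real" assume \<phi>: "test_fun \<phi>"
    have "(LINT x|lborel. g1 x * of_real (\<phi> x)) = (LINT x|lborel. g2 x * of_real (\<phi> x))"
      using w1 w2 \<phi> unfolding weak_deriv_def by (metis minus_equation_iff)
    then show "(LINT x|lborel. (g1 x - g2 x) * of_real (\<phi> x)) = 0"
      using test_integrable[OF g1 \<phi>] test_integrable[OF g2 \<phi>] by (simp add: left_diff_distrib)
  qed
  then show ?thesis by simp
qed

lemma l2norm_sq_AE:
  assumes "square_integrable f" "square_integrable g" "AE x in lborel. f x = g x"
  shows "l2norm_sq f = l2norm_sq g"
  unfolding l2norm_sq_def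
  using assms by (intro integral_cong_AE) (auto simp: square_integrable_def elim: AE_mp)

lemma weak_partial_norm:
  assumes "H1 u" "b \<in> Basis" "square_integrable g" "weak_deriv u b g"
  shows "l2norm_sq (weak_partial u b) = l2norm_sq g"
proof -
  have "\<exists>g. square_integrable g \<and> weak_deriv u b g" using assms by blast
  then have w: "square_integrable (weak_partial u b) \<and> weak_deriv u b (weak_partial u b)"
    unfolding weak_partial_def by (rule someI_ex)
  show ?thesis using w assms weak_deriv_unique l2norm_sq_AE by metis
qed

lemma weak_partial_props:
  assumes "H1 u" "b \<in> Basis"
  shows "square_integrable (weak_partial u b) \<and> weak_deriv u b (weak_partial u b)"
proof -
  have "\<exists>g. square_integrable g \<and> weak_deriv u b g" using assms unfolding H1_def by blast
  then show ?thesis unfolding weak_partial_def by (rule someI_ex)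
qed


lemma nn_integral_scale:
  fixes f :: "'a::euclidean_space \<Rightarrow> ennreal"
  assumes [measurable]: "f \<in> borel_measurable borel" and c: "c \<noteq> 0"
  shows "(\<integral>\<^sup>+x. f x \<partial>lborel) = ennreal (\<bar>c\<bar>^DIM('a)) * (\<integral>\<^sup>+x. f (c *\<^sub>R x) \<partial>lborel)"
  by (subst lborel_affine[OF c, of 0])
     (simp add: nn_integral_density nn_integral_distr nn_integral_cmult)

lemma integrable_scale:
  fixes f :: "'a::euclidean_space \<Rightarrow> 'b :: {banach, second_countable_topology}"
  assumes f: "integrable lborel f" and c: "c \<noteq> 0"
  shows "integrable lborel (\<lambda>x. f (c *\<^sub>R x))"
  using f f[THEN borel_measurable_integrable] unfolding integrable_iff_bounded
  by (subst (asm) nn_integral_scale[where c=c]) (auto simp: ennreal_mult_less_top c)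

lemma integrable_scale_iff:
  fixes f :: "'a::euclidean_space \<Rightarrow> 'b :: {banach, second_countable_topology}"
  assumes c: "c \<noteq> 0"
  shows "integrable lborel (\<lambda>x. f (c *\<^sub>R x)) \<longleftrightarrow> integrable lborel f"
  using integrable_scale[of f c] integrable_scale[of "\<lambda>x. f (c *\<^sub>R x)" "1/c"] c
  by auto

lemma integral_scale:
  fixes f :: "'a::euclidean_space \<Rightarrow> 'b :: {banach, second_countable_topology}"
  assumes c: "c \<noteq> 0"
  shows "(\<integral>x. f x \<partial>lborel) = (\<bar>c\<bar>^DIM('a)) *\<^sub>R (\<integral>x. f (c *\<^sub>R x) \<partial>lborel)"
proof cases
  assume f[measurable]: "integrable lborel f" then show ?thesis
    using c f f[THEN borel_measurable_integrable] f[THEN integrable_scale, of c]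
    by (subst lborel_affine[OF c, of 0])
       (simp add: integral_density integral_distr)
next
  assume "\<not> integrable lborel f" with c show ?thesis
    by (simp add: integrable_scale_iff not_integrable_integral_eq)
qed

definition dil :: "complex \<Rightarrow> real \<Rightarrow> ('a::euclidean_space \<Rightarrow> complex) \<Rightarrow> 'a \<Rightarrow> complex" where
  "dil a c f x = a * f (c *\<^sub>R x)"

lemma sq_int_dil:
  assumes f: "square_integrable f" and c: "c \<noteq> 0"
  shows "square_integrable (dil a c f)"
  unfolding square_integrable_def dil_def
proof
  have [measurable]: "f \<in> borel_measurable borel" using f by (simp add: square_integrable_def)
  show "(\<lambda>x. a * f (c *\<^sub>R x)) \<in> borel_measurable lborel" by measurable
  have "integrable lborel (\<lambda>x. (cmod (f (c *\<^sub>R x)))^2)"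
    using f c by (intro integrable_scale) (auto simp: square_integrable_def)
  then have "integrable lborel (\<lambda>x. (cmod a)^2 * (cmod (f (c *\<^sub>R x)))^2)" by simp
  then show "integrable lborel (\<lambda>x. (cmod (a * f (c *\<^sub>R x)))^2)"
    by (simp add: norm_mult power_mult_distrib)
qed

lemma l2norm_dil:
  assumes c: "c \<noteq> 0"
  shows "l2norm_sq (dil a c f) = (cmod a)^2 / \<bar>c\<bar>^DIM('a) * l2norm_sq (f :: 'a::euclidean_space \<Rightarrow> complex)"
proof -
  have "l2norm_sq f = \<bar>c\<bar>^DIM('a) * (LINT x|lborel. (cmod (f (c *\<^sub>R x)))^2)"
    unfolding l2norm_sq_def by (subst integral_scale[OF c]) simp
  moreover have "l2norm_sq (dil a c f) = (cmod a)^2 * (LINT x|lborel. (cmod (f (c *\<^sub>R x)))^2)"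
    unfolding l2norm_sq_def dil_def by (simp add: norm_mult power_mult_distrib)
  ultimately show ?thesis using c by simp
qed

lemma test_fun_scale:
  assumes \<phi>: "test_fun \<phi>" and c: "c \<noteq> 0"
  shows "test_fun (\<lambda>x. \<phi> (c *\<^sub>R x))"
    and "frechet_derivative (\<lambda>x. \<phi> (c *\<^sub>R x)) (at x) b = c * frechet_derivative \<phi> (at (c *\<^sub>R x)) b"
proof -
  have d: "(\<phi> has_derivative frechet_derivative \<phi> (at y)) (at y)" for y
    using \<phi> unfolding test_fun_def using frechet_derivative_works by blast
  have lin: "linear (frechet_derivative \<phi> (at y))" for y
    using \<phi> unfolding test_fun_def by (simp add: linear_frechet_derivative)
  have dx: "((\<lambda>x. \<phi> (c *\<^sub>R x)) has_derivative (\<lambda>h. frechet_derivative \<phi> (at (c *\<^sub>R x)) (c *\<^sub>R h))) (at x)" for x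
    by (rule has_derivative_compose[OF _ d]) (auto intro!: derivative_eq_intros)
  have fd: "frechet_derivative (\<lambda>x. \<phi> (c *\<^sub>R x)) (at x) = (\<lambda>h. frechet_derivative \<phi> (at (c *\<^sub>R x)) (c *\<^sub>R h))" for x
    using frechet_derivative_at[OF dx] by simp
  show fdb: "frechet_derivative (\<lambda>x. \<phi> (c *\<^sub>R x)) (at x) b = c * frechet_derivative \<phi> (at (c *\<^sub>R x)) b" for x
    unfolding fd using linear_scale[OF lin] by simp
  show "test_fun (\<lambda>x. \<phi> (c *\<^sub>R x))"
    unfolding test_fun_def
  proof (intro conjI allI ballI)
    fix x show "(\<lambda>x. \<phi> (c *\<^sub>R x)) differentiable at x" using dx differentiable_def by blast
  next
    fix b :: 'a assume b: "b \<in> Basis"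
    have "continuous_on UNIV (\<lambda>y. frechet_derivative \<phi> (at y) b)" using \<phi> b unfolding test_fun_def by blast
    then have "continuous_on UNIV (\<lambda>x. c * frechet_derivative \<phi> (at (c *\<^sub>R x)) b)"
    proof -
      assume cc: "continuous_on UNIV (\<lambda>y. frechet_derivative \<phi> (at y) b)"
      have "continuous_on UNIV (\<lambda>x. frechet_derivative \<phi> (at (c *\<^sub>R x)) b)"
        by (rule continuous_on_compose2[OF cc, of UNIV "\<lambda>x. c *\<^sub>R x"]) (auto intro: continuous_intros)
      then show ?thesis by (rule continuous_on_mult_left)
    qed
    moreover have "(\<lambda>x. frechet_derivative (\<lambda>x. \<phi> (c *\<^sub>R x)) (at x) b) = (\<lambda>x. c * frechet_derivative \<phi> (at (c *\<^sub>R x)) b)"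
      unfolding fd using linear_scale[OF lin] by simp
    ultimately show "continuous_on UNIV (\<lambda>x. frechet_derivative (\<lambda>x. \<phi> (c *\<^sub>R x)) (at x) b)" by (simp only:)
  next
    obtain R where R: "\<forall>y\<in>{y. \<phi> y \<noteq> 0}. norm y \<le> R" using \<phi> unfolding test_fun_def bounded_iff by blast
    have "\<forall>x\<in>{x. \<phi> (c *\<^sub>R x) \<noteq> 0}. norm x \<le> R / \<bar>c\<bar>"
    proof
      fix x assume "x \<in> {x. \<phi> (c *\<^sub>R x) \<noteq> 0}"
      then have "norm (c *\<^sub>R x) \<le> R" using R by auto
      then show "norm x \<le> R / \<bar>c\<bar>" using c by (simp add: field_simps)
    qed
    then show "bounded {x. \<phi> (c *\<^sub>R x) \<noteq> 0}" unfolding bounded_iff by blast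
  qed
qed


lemma weak_deriv_dil:
  fixes u g :: "'a::euclidean_space \<Rightarrow> complex"
  assumes c: "c > 0" and w: "weak_deriv u b g"
  shows "weak_deriv (dil a c u) b (dil (a * of_real c) c g)"
  unfolding weak_deriv_def
proof (intro allI impI)
  fix \<phi> :: "'a \<Rightarrow> real" assume \<phi>: "test_fun \<phi>"
  define n where "n = DIM('a)"
  define \<psi> where "\<psi> y = \<phi> ((1/c) *\<^sub>R y)" for y
  have c0: "1/c \<noteq> 0" "c \<noteq> 0" using c by auto
  have \<psi>t: "test_fun \<psi>" unfolding \<psi>_def[abs_def] by (rule test_fun_scale(1)[OF \<phi> c0(1)])
  have F\<psi>: "frechet_derivative \<psi> (at y) b = (1/c) * frechet_derivative \<phi> (at ((1/c) *\<^sub>R y)) b" for y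
    unfolding \<psi>_def[abs_def] by (rule test_fun_scale(2)[OF \<phi> c0(1)])
  have s1: "(LINT y|lborel. u y * of_real (frechet_derivative \<psi> (at y) b)) = - (LINT y|lborel. g y * of_real (\<psi> y))"
    using w \<psi>t unfolding weak_deriv_def by blast
  have s2: "(LINT y|lborel. u y * of_real (frechet_derivative \<psi> (at y) b))
      = c^n *\<^sub>R (LINT x|lborel. u (c *\<^sub>R x) * of_real (frechet_derivative \<psi> (at (c *\<^sub>R x)) b))"
    using integral_scale[OF c0(2), of "\<lambda>y. u y * of_real (frechet_derivative \<psi> (at y) b)"] c
    by (simp add: n_def)
  have s2': "(LINT x|lborel. u (c *\<^sub>R x) * of_real (frechet_derivative \<psi> (at (c *\<^sub>R x)) b))
      = of_real (1/c) * (LINT x|lborel. u (c *\<^sub>R x) * of_real (frechet_derivative \<phi> (at x) b))"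
    using c by (simp add: F\<psi> mult.left_commute mult.commute)
  have s3: "(LINT y|lborel. g y * of_real (\<psi> y)) = c^n *\<^sub>R (LINT x|lborel. g (c *\<^sub>R x) * of_real (\<phi> x))"
    using integral_scale[OF c0(2), of "\<lambda>y. g y * of_real (\<psi> y)"] c
    by (simp add: n_def \<psi>_def)
  have cn: "(c^n :: real) \<noteq> 0" using c by simp
  have key: "(LINT x|lborel. u (c *\<^sub>R x) * of_real (frechet_derivative \<phi> (at x) b))
      = - (of_real c * (LINT x|lborel. g (c *\<^sub>R x) * of_real (\<phi> x)))"
  proof -
    define X where "X = (LINT x|lborel. u (c *\<^sub>R x) * of_real (frechet_derivative \<phi> (at x) b))"
    define Y where "Y = (LINT x|lborel. g (c *\<^sub>R x) * of_real (\<phi> x))"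
    have "c^n *\<^sub>R (of_real (1/c) * X) = c^n *\<^sub>R (- Y)"
      using s1 s2 s2' s3 unfolding X_def Y_def by simp
    then have "of_real (1/c) * X = - Y"
      using cn scaleR_cancel_left by blast
    then have "of_real c * (of_real (1/c) * X) = of_real c * (- Y)" by simp
    moreover have "complex_of_real c * complex_of_real (1 / c) = 1" using c by (simp flip: of_real_mult)
    ultimately show "X = - (of_real c * Y)" by (simp add: mult.assoc[symmetric] del: of_real_divide)
  qed
  show "(LINT x|lborel. dil a c u x * of_real (frechet_derivative \<phi> (at x) b)) =
        - (LINT x|lborel. dil (a * of_real c) c g x * of_real (\<phi> x))"
    unfolding dil_def using key by (simp add: mult.assoc)
qed


lemma l2norm_sq_nonneg: "l2norm_sq f \<ge> 0"
  unfolding l2norm_sq_def by (rule integral_nonneg_AE) auto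

lemma grad_norm_sq_nonneg: "grad_norm_sq u \<ge> 0"
  unfolding grad_norm_sq_def by (intro sum_nonneg l2norm_sq_nonneg)

lemma dil_facts:
  fixes u :: "'a::euclidean_space \<Rightarrow> complex"
  assumes H: "H1 u" and c: "c > 0"
  defines "a \<equiv> complex_of_real (c powr (real DIM('a) / 2))"
  shows "H1 (dil a c u)" "l2norm_sq (dil a c u) = l2norm_sq u"
    "grad_norm_sq (dil a c u) = c^2 * grad_norm_sq u"
proof -
  have a2: "(cmod a)^2 = c ^ DIM('a)"
  proof -
    have "(cmod a)^2 = (c powr (real DIM('a) / 2)) * (c powr (real DIM('a) / 2))"
      unfolding a_def by (simp add: power2_eq_square)
    also have "\<dots> = c powr (real DIM('a))" by (simp add: powr_add[symmetric])
    also have "\<dots> = c ^ DIM('a)" using c by (simp add: powr_realpow)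
    finally show ?thesis .
  qed
  have c0: "c \<noteq> 0" using c by simp
  have sq: "square_integrable u" using H unfolding H1_def by blast
  have wp: "square_integrable (weak_partial u b) \<and> weak_deriv u b (weak_partial u b)" if "b \<in> Basis" for b
    by (rule weak_partial_props[OF H that])
  have wd: "square_integrable (dil (a * of_real c) c (weak_partial u b)) \<and>
        weak_deriv (dil a c u) b (dil (a * of_real c) c (weak_partial u b))" if "b \<in> Basis" for b
    using wp[OF that] sq_int_dil[OF _ c0] weak_deriv_dil[OF c] by blast
  show H1: "H1 (dil a c u)"
    unfolding H1_def using sq_int_dil[OF sq c0] wd by blast
  show "l2norm_sq (dil a c u) = l2norm_sq u"
    using l2norm_dil[OF c0, of a u] a2 c by simp
  have "l2norm_sq (weak_partial (dil a c u) b) = c^2 * l2norm_sq (weak_partial u b)" if b: "b \<in> Basis" for b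
  proof -
    have "l2norm_sq (weak_partial (dil a c u) b) = l2norm_sq (dil (a * of_real c) c (weak_partial u b))"
      using weak_partial_norm[OF H1 b] wd[OF b] by blast
    also have "\<dots> = (cmod (a * of_real c))^2 / \<bar>c\<bar>^DIM('a) * l2norm_sq (weak_partial u b)"
      by (rule l2norm_dil[OF c0])
    also have "\<dots> = c^2 * l2norm_sq (weak_partial u b)"
      using a2 c by (simp add: norm_mult power_mult_distrib)
    finally show ?thesis .
  qed
  then show "grad_norm_sq (dil a c u) = c^2 * grad_norm_sq u"
    unfolding grad_norm_sq_def by (simp add: sum_distrib_left)
qed

lemma mu_ge_beta:
  fixes u :: "'a::euclidean_space \<Rightarrow> complex"
  assumes K: "K > 0"
    and hyp: "\<forall>u :: 'a::euclidean_space \<Rightarrow> complex. H1 u \<and> l2norm_sq u = \<beta> \<longrightarrow>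
           l2norm_sq u \<le> grad_norm_sq u / K^2 + \<mu>"
    and H: "H1 u" and n: "l2norm_sq u = \<beta>"
  shows "\<beta> \<le> \<mu>"
proof (rule ccontr)
  assume "\<not> \<beta> \<le> \<mu>"
  then have d: "\<beta> - \<mu> > 0" by simp
  define C where "C = grad_norm_sq u / K^2"
  have C: "C \<ge> 0" unfolding C_def using grad_norm_sq_nonneg[of u] by simp
  define c where "c = sqrt ((\<beta> - \<mu>) / (C + 1))"
  have c: "c > 0" unfolding c_def using d C by simp
  have c2: "c^2 = (\<beta> - \<mu>) / (C + 1)" unfolding c_def using d C by simp
  define a where "a = complex_of_real (c powr (real DIM('a) / 2))"
  have "H1 (dil a c u) \<and> l2norm_sq (dil a c u) = \<beta>" using dil_facts[OF H c] n unfolding a_def by simp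
  then have "l2norm_sq (dil a c u) \<le> grad_norm_sq (dil a c u) / K^2 + \<mu>" using hyp by blast
  then have "\<beta> \<le> c^2 * C + \<mu>" using dil_facts[OF H c] n unfolding a_def C_def by simp
  moreover have "c^2 * C < \<beta> - \<mu>"
  proof -
    have "c^2 * C = (\<beta> - \<mu>) * (C / (C + 1))" using c2 by simp
    also have "\<dots> < (\<beta> - \<mu>) * 1" using d C by (intro mult_strict_left_mono) auto
    finally show ?thesis by simp
  qed
  ultimately show False by simp
qed


lemma gauss_integrable1:
  assumes e: "(\<epsilon>::real) > 0"
  shows "integrable lborel (\<lambda>t::real. exp (- \<epsilon> * t\<^sup>2))"
proof -
  define c where "c = sqrt (2 * \<epsilon>)"
  have c: "c > 0" "c^2 = 2 * \<epsilon>" using e by (auto simp: c_def)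
  have "integrable lborel (\<lambda>t. std_normal_density (0 + c * t))"
    by (rule lborel_integrable_real_affine) (use c in auto)
  then have i: "integrable lborel (\<lambda>t. sqrt (2 * pi) * std_normal_density (0 + c * t))"
    by (rule Bochner_Integration.integrable_mult_right)
  have eq: "(\<lambda>t. sqrt (2 * pi) * std_normal_density (0 + c * t)) = (\<lambda>t. exp (- \<epsilon> * t\<^sup>2))"
    unfolding std_normal_density_def using c by (simp add: power_mult_distrib)
  show ?thesis using i unfolding eq .
qed

lemma gauss_ft1:
  assumes e: "(\<epsilon>::real) > 0"
  shows "(LINT t|lborel. of_real (exp (- \<epsilon> * t\<^sup>2)) * exp (- \<i> * of_real (t * s)))
       = of_real (sqrt (pi / \<epsilon>) * exp (- s\<^sup>2 / (4 * \<epsilon>)))"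
proof -
  define c where "c = sqrt (2 * \<epsilon>)"
  have c: "c > 0" "c^2 = 2 * \<epsilon>" using e by (auto simp: c_def)
  define \<tau> where "\<tau> = - s / c"
  define I where "I = (LINT t|lborel. of_real (exp (- \<epsilon> * t\<^sup>2)) * exp (- \<i> * of_real (t * s)))"
  have "char std_normal_distribution \<tau> = of_real (exp (- (\<tau>^2) / 2))"
    by (simp add: char_std_normal_distribution)
  moreover have "char std_normal_distribution \<tau> = (LINT x|lborel. std_normal_density x *\<^sub>R iexp (\<tau> * x))"
    unfolding char_def by (subst integral_density) (auto intro!: borel_measurable_continuous_onI continuous_intros)
  moreover have "(LINT x|lborel. std_normal_density x *\<^sub>R iexp (\<tau> * x))
     = c *\<^sub>R (LINT t|lborel. std_normal_density (0 + c * t) *\<^sub>R iexp (\<tau> * (0 + c * t)))"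
    using lborel_integral_real_affine[of c "\<lambda>x. std_normal_density x *\<^sub>R iexp (\<tau> * x)" 0] c by simp
  moreover have "std_normal_density (0 + c * t) *\<^sub>R iexp (\<tau> * (0 + c * t))
     = of_real (1 / sqrt (2 * pi)) * (of_real (exp (- \<epsilon> * t\<^sup>2)) * exp (- \<i> * of_real (t * s)))" for t
  proof -
    have "(c * t)^2 / 2 = \<epsilon> * t^2" using c by (simp add: power_mult_distrib)
    moreover have "\<tau> * (c * t) = - (t * s)" using c by (simp add: \<tau>_def)
    ultimately show ?thesis unfolding std_normal_density_def
      by (simp add: scaleR_conv_of_real algebra_simps)
  qed
  ultimately have "of_real (exp (- (\<tau>^2) / 2)) = c *\<^sub>R (of_real (1 / sqrt (2 * pi)) * I)"
    unfolding I_def by simp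
  then have "I = of_real (sqrt (2 * pi) / c * exp (- (\<tau>^2) / 2))"
    using c by (simp add: scaleR_conv_of_real field_simps)
  moreover have "sqrt (2 * pi) / c = sqrt (pi / \<epsilon>)"
    using e unfolding c_def by (simp add: real_sqrt_divide[symmetric])
  moreover have "\<tau>^2 / 2 = s\<^sup>2 / (4 * \<epsilon>)"
    using c e by (simp add: \<tau>_def power_divide)
  ultimately show ?thesis unfolding I_def by simp
qed


lemma lborel_prod_facts:
  fixes f :: "'a::euclidean_space \<Rightarrow> real \<Rightarrow> complex"
  assumes int: "\<And>b. b \<in> Basis \<Longrightarrow> integrable lborel (f b)"
  shows "(LINT x|lborel. (\<Prod>b\<in>Basis. f b (x \<bullet> b))) = (\<Prod>b\<in>Basis. (LINT t|lborel. f b t))"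
    and "integrable lborel (\<lambda>x. \<Prod>b\<in>Basis. f b (x \<bullet> b))"
proof -
  interpret P: product_sigma_finite "\<lambda>_::'a. lborel::real measure"
    by (simp add: product_sigma_finite_def sigma_finite_lborel)
  define T where "T y = (\<Sum>b\<in>Basis. y b *\<^sub>R b)" for y :: "'a \<Rightarrow> real"
  have fm[measurable]: "f b \<in> borel_measurable borel" if "b \<in> Basis" for b
    using int[OF that] by (simp add: borel_measurable_integrable)
  have Tm[measurable]: "T \<in> measurable (\<Pi>\<^sub>M b\<in>Basis. (lborel::real measure)) borel"
    unfolding T_def[abs_def] by measurable
  have gm: "(\<lambda>x::'a. \<Prod>b\<in>Basis. f b (x \<bullet> b)) \<in> borel_measurable borel"
    by measurable
  have Tb: "T y \<bullet> b = y b" if "b \<in> Basis" for y b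
    using that unfolding T_def by (simp add: inner_sum_left inner_Basis if_distrib cong: if_cong)
  have L: "lborel = distr (\<Pi>\<^sub>M b\<in>Basis. (lborel::real measure)) borel T"
    unfolding T_def[abs_def] by (rule lborel_eq[where 'a='a])
  have e: "(\<lambda>y. \<Prod>b\<in>Basis. f b (T y \<bullet> b)) = (\<lambda>y. \<Prod>b\<in>Basis. f b (y b))"
    by (rule ext, rule prod.cong) (auto simp: Tb)
  have "(LINT x|lborel. (\<Prod>b\<in>Basis. f b (x \<bullet> b))) = (\<integral>y. (\<Prod>b\<in>Basis. f b (T y \<bullet> b)) \<partial>(\<Pi>\<^sub>M b\<in>Basis. (lborel::real measure)))"
    by (subst L) (rule integral_distr[OF Tm gm])
  also have "\<dots> = (\<integral>y. (\<Prod>b\<in>Basis. f b (y b)) \<partial>(\<Pi>\<^sub>M b\<in>Basis. (lborel::real measure)))"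
    unfolding e ..
  also have "\<dots> = (\<Prod>b\<in>Basis. (LINT t|lborel. f b t))"
    by (rule P.product_integral_prod) (auto intro: int)
  finally show "(LINT x|lborel. (\<Prod>b\<in>Basis. f b (x \<bullet> b))) = (\<Prod>b\<in>Basis. (LINT t|lborel. f b t))" .
  have "integrable (\<Pi>\<^sub>M b\<in>Basis. (lborel::real measure)) (\<lambda>y. \<Prod>b\<in>Basis. f b (y b))"
    by (rule P.product_integrable_prod) (auto intro: int)
  then have "integrable (\<Pi>\<^sub>M b\<in>Basis. (lborel::real measure)) (\<lambda>y. \<Prod>b\<in>Basis. f b (T y \<bullet> b))"
    unfolding e .
  then have "integrable (distr (\<Pi>\<^sub>M b\<in>Basis. (lborel::real measure)) borel T) (\<lambda>x::'a. \<Prod>b\<in>Basis. f b (x \<bullet> b))"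
    by (subst integrable_distr_eq[OF Tm gm]) (simp add: comp_def)
  then show "integrable lborel (\<lambda>x. \<Prod>b\<in>Basis. f b (x \<bullet> b))" by (simp flip: L)
qed

lemma gauss_ft:
  fixes z :: "'a::euclidean_space"
  assumes e: "(\<epsilon>::real) > 0"
  shows "(LINT x|lborel. of_real (exp (- \<epsilon> * (norm x)\<^sup>2)) * exp (- \<i> * of_real (x \<bullet> z)))
       = of_real ((sqrt (pi / \<epsilon>)) ^ DIM('a) * exp (- (norm z)\<^sup>2 / (4 * \<epsilon>)))"
    and "integrable lborel (\<lambda>x::'a. of_real (exp (- \<epsilon> * (norm x)\<^sup>2)) * exp (- \<i> * of_real (x \<bullet> z)))"
proof -
  define f where "f b t = of_real (exp (- \<epsilon> * t\<^sup>2)) * exp (- \<i> * of_real (t * (z \<bullet> b)))" for b :: 'a and t :: real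
  have int: "integrable lborel (f b)" for b
  proof -
    have "integrable lborel (\<lambda>t. exp (- \<epsilon> * t\<^sup>2))" by (rule gauss_integrable1[OF e])
    then show ?thesis unfolding f_def[abs_def]
      by (rule Bochner_Integration.integrable_bound) (auto simp: norm_mult intro!: borel_measurable_continuous_onI continuous_intros)
  qed
  have eq: "(\<Prod>b\<in>Basis. f b (x \<bullet> b)) = of_real (exp (- \<epsilon> * (norm x)\<^sup>2)) * exp (- \<i> * of_real (x \<bullet> z))" for x :: 'a
  proof -
    have n2: "(norm x)\<^sup>2 = (\<Sum>b\<in>Basis. (x \<bullet> b)\<^sup>2)"
      by (simp only: power2_norm_eq_inner euclidean_inner[of x x]) (simp add: power2_eq_square)
    have ip: "x \<bullet> z = (\<Sum>b\<in>Basis. (x \<bullet> b) * (z \<bullet> b))" by (rule euclidean_inner)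
    have "(\<Prod>b\<in>Basis. f b (x \<bullet> b)) = (\<Prod>b\<in>Basis. of_real (exp (- \<epsilon> * (x \<bullet> b)\<^sup>2))) * (\<Prod>b\<in>Basis. exp (- \<i> * of_real ((x \<bullet> b) * (z \<bullet> b))))"
      unfolding f_def by (rule prod.distrib)
    also have "(\<Prod>b\<in>Basis. of_real (exp (- \<epsilon> * (x \<bullet> b)\<^sup>2))) = (of_real (exp (- \<epsilon> * (norm x)\<^sup>2)) :: complex)"
      unfolding n2 by (simp add: exp_sum sum_distrib_left sum_negf[symmetric] of_real_prod)
    also have "(\<Prod>b\<in>Basis. exp (- \<i> * of_real ((x \<bullet> b) * (z \<bullet> b)))) = exp (- \<i> * of_real (x \<bullet> z))"
      unfolding ip by (simp add: exp_sum[symmetric] sum_distrib_left sum_negf of_real_sum)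
    finally show ?thesis .
  qed
  have "(LINT x|lborel. (\<Prod>b\<in>Basis. f b (x \<bullet> b))) = (\<Prod>b\<in>Basis. (LINT t|lborel. f b t))"
    by (rule lborel_prod_facts(1)[OF int])
  also have "\<dots> = (\<Prod>b\<in>Basis. of_real (sqrt (pi / \<epsilon>) * exp (- (z \<bullet> b)\<^sup>2 / (4 * \<epsilon>))))"
    unfolding f_def by (intro prod.cong refl gauss_ft1[OF e])
  also have "\<dots> = of_real ((sqrt (pi / \<epsilon>)) ^ DIM('a) * exp (- (norm z)\<^sup>2 / (4 * \<epsilon>)))"
  proof -
    have n2: "(norm z)\<^sup>2 = (\<Sum>b\<in>Basis. (z \<bullet> b)\<^sup>2)"
      by (simp only: power2_norm_eq_inner euclidean_inner[of z z]) (simp add: power2_eq_square)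
    show ?thesis unfolding n2
      by (simp add: of_real_prod[symmetric] prod.distrib exp_sum[symmetric] sum_divide_distrib sum_negf)
  qed
  finally show "(LINT x|lborel. of_real (exp (- \<epsilon> * (norm x)\<^sup>2)) * exp (- \<i> * of_real (x \<bullet> z)))
       = of_real ((sqrt (pi / \<epsilon>)) ^ DIM('a) * exp (- (norm z)\<^sup>2 / (4 * \<epsilon>)))"
    unfolding eq .
  show "integrable lborel (\<lambda>x::'a. of_real (exp (- \<epsilon> * (norm x)\<^sup>2)) * exp (- \<i> * of_real (x \<bullet> z)))"
    using lborel_prod_facts(2)[of f, OF int] unfolding eq .
qed


abbreviation ph :: "'a::euclidean_space \<Rightarrow> 'a \<Rightarrow> complex" where
  "ph y \<xi> \<equiv> exp (- \<i> * of_real (y \<bullet> \<xi>))"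

lemma norm_ph[simp]: "norm (ph y \<xi>) = 1"
  by (simp add: norm_exp_i_times[of "- (y \<bullet> \<xi>)", simplified])

lemma ph_meas[measurable]: "(\<lambda>(x::'a::euclidean_space, y). ph x y) \<in> borel_measurable borel"
  by (intro borel_measurable_continuous_onI) (auto intro!: continuous_intros simp: case_prod_beta)

lemma duality:
  fixes \<phi> \<psi> :: "'a::euclidean_space \<Rightarrow> complex"
  assumes \<phi>: "integrable lborel \<phi>" and \<psi>: "integrable lborel \<psi>"
  shows "(LINT \<xi>|lborel. \<phi> \<xi> * (LINT y|lborel. ph y \<xi> * \<psi> y))
       = (LINT y|lborel. \<psi> y * (LINT \<xi>|lborel. ph y \<xi> * \<phi> \<xi>))"
proof -
  have [measurable]: "\<phi> \<in> borel_measurable borel" "\<psi> \<in> borel_measurable borel"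
    using \<phi> \<psi> by (auto dest: borel_measurable_integrable)
  define f where "f \<xi> y = \<phi> \<xi> * (ph y \<xi> * \<psi> y)" for \<xi> y
  have fm: "case_prod f \<in> borel_measurable (lborel \<Otimes>\<^sub>M lborel)"
    unfolding f_def[abs_def] by measurable
  have int: "integrable (lborel \<Otimes>\<^sub>M lborel) (case_prod f)"
  proof (rule lborel_pair.Fubini_integrable[OF fm])
    have "(\<lambda>\<xi>. LINT y|lborel. norm (case_prod f (\<xi>, y))) = (\<lambda>\<xi>. norm (\<phi> \<xi>) * (LINT y|lborel. norm (\<psi> y)))"
      unfolding f_def by (simp add: norm_mult)
    then show "integrable lborel (\<lambda>\<xi>. LINT y|lborel. norm (case_prod f (\<xi>, y)))"
      using \<phi> by simp
    show "AE \<xi> in lborel. integrable lborel (\<lambda>y. case_prod f (\<xi>, y))"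
    proof (intro AE_I2)
      fix \<xi>
      have "integrable lborel (\<lambda>y. ph y \<xi> * \<psi> y)"
        by (rule Bochner_Integration.integrable_bound[OF integrable_norm[OF \<psi>]]) (auto simp: norm_mult)
      then show "integrable lborel (\<lambda>y. case_prod f (\<xi>, y))" unfolding f_def by simp
    qed
  qed
  have "(LINT \<xi>|lborel. \<phi> \<xi> * (LINT y|lborel. ph y \<xi> * \<psi> y)) = (LINT \<xi>|lborel. (LINT y|lborel. f \<xi> y))"
    unfolding f_def by simp
  also have "\<dots> = (LINT y|lborel. (LINT \<xi>|lborel. f \<xi> y))"
    by (rule lborel_pair.Fubini_integral[OF int, symmetric])
  also have "\<dots> = (LINT y|lborel. \<psi> y * (LINT \<xi>|lborel. ph y \<xi> * \<phi> \<xi>))"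
    unfolding f_def by (simp add: ac_simps integral_mult_right_zero[symmetric] del: integral_mult_right_zero)
  finally show ?thesis .
qed

definition kap :: "'a::euclidean_space itself \<Rightarrow> real" where
  "kap _ = (2 * pi) powr (- real DIM('a))"

lemma fourier_L1_alt: "fourier_L1 w \<xi> = of_real (kap TYPE('a)) * (LINT y|lborel. ph y \<xi> * w y)"
  for w :: "'a::euclidean_space \<Rightarrow> complex"
  unfolding fourier_L1_def kap_def by simp

lemma fourier_meas[measurable]:
  fixes w :: "'a::euclidean_space \<Rightarrow> complex"
  assumes [measurable]: "w \<in> borel_measurable borel"
  shows "fourier_L1 w \<in> borel_measurable borel"
proof -
  have "(\<lambda>\<xi>. LINT y|lborel. ph y \<xi> * w y) \<in> borel_measurable borel"
    by measurable
  then show ?thesis unfolding fourier_L1_alt[abs_def] by measurable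
qed

lemma fourier_bound:
  fixes w :: "'a::euclidean_space \<Rightarrow> complex"
  shows "norm (fourier_L1 w \<xi>) \<le> kap TYPE('a) * (LINT y|lborel. norm (w y))"
proof -
  have k: "kap TYPE('a) \<ge> 0" unfolding kap_def by simp
  have "norm (LINT y|lborel. ph y \<xi> * w y) \<le> (LINT y|lborel. norm (ph y \<xi> * w y))"
    by (rule integral_norm_bound)
  then show ?thesis unfolding fourier_L1_alt using k by (simp add: norm_mult mult_left_mono)
qed


lemma gauss_int_nd:
  assumes e: "(\<epsilon>::real) > 0"
  shows "integrable lborel (\<lambda>x::'a::euclidean_space. exp (- \<epsilon> * (norm x)\<^sup>2))"
proof -
  have "integrable lborel (\<lambda>x::'a. norm (of_real (exp (- \<epsilon> * (norm x)\<^sup>2)) * ph x 0))"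
    using integrable_norm[OF gauss_ft(2)[OF e, of 0]] by simp
  then show ?thesis by (simp add: norm_mult)
qed

definition Gr :: "real \<Rightarrow> 'a::euclidean_space \<Rightarrow> real" where
  "Gr \<epsilon> z = (sqrt (pi / \<epsilon>)) ^ DIM('a) * exp (- (norm z)\<^sup>2 / (4 * \<epsilon>))"

lemma Gr_nonneg: "\<epsilon> > 0 \<Longrightarrow> Gr \<epsilon> z \<ge> 0"
  unfolding Gr_def by simp

lemma J_identity:
  fixes w :: "'a::euclidean_space \<Rightarrow> complex"
  assumes e: "(\<epsilon>::real) > 0" and w: "integrable lborel w"
  shows "(LINT \<xi>|lborel. of_real (exp (- \<epsilon> * (norm \<xi>)\<^sup>2)) * (fourier_L1 w \<xi> * cnj (fourier_L1 w \<xi>)))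
     = of_real (kap TYPE('a))^2 * (LINT y|lborel. w y * (LINT x|lborel. cnj (w x) * of_real (Gr \<epsilon> (x - y))))"
proof -
  let ?k = "kap TYPE('a)"
  let ?g = "\<lambda>\<xi>::'a. exp (- \<epsilon> * (norm \<xi>)\<^sup>2)"
  let ?F = "fourier_L1 w"
  have wm[measurable]: "w \<in> borel_measurable borel" using w by (simp add: borel_measurable_integrable)
  have gi: "integrable lborel ?g" by (rule gauss_int_nd[OF e])
  have [measurable]: "?g \<in> borel_measurable borel" using gi by (simp add: borel_measurable_integrable)
  have Fm[measurable]: "?F \<in> borel_measurable borel" by (rule fourier_meas[OF wm])
  have cFm[measurable]: "(\<lambda>x. cnj (?F x)) \<in> borel_measurable borel"
    by (rule borel_measurable_continuous_on[OF _ Fm]) (intro continuous_intros)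
  define \<phi>1 where "\<phi>1 \<xi> = of_real (?g \<xi>) * cnj (?F \<xi>)" for \<xi>
  have \<phi>1i: "integrable lborel \<phi>1"
  proof -
    have "integrable lborel (\<lambda>\<xi>. (?k * (LINT y|lborel. norm (w y))) * ?g \<xi>)" using gi by simp
    then show ?thesis unfolding \<phi>1_def
    proof (rule Bochner_Integration.integrable_bound)
      show "(\<lambda>\<xi>. complex_of_real (?g \<xi>) * cnj (?F \<xi>)) \<in> borel_measurable lborel" by measurable
      show "AE \<xi> in lborel. norm (complex_of_real (?g \<xi>) * cnj (?F \<xi>)) \<le> norm (?k * (LINT y|lborel. norm (w y)) * ?g \<xi>)"
      proof (intro AE_I2)
        fix \<xi>
        have "norm (?F \<xi>) \<le> ?k * (LINT y|lborel. norm (w y))" by (rule fourier_bound)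
        moreover have "?k * (LINT y|lborel. norm (w y)) \<ge> 0" unfolding kap_def by simp
        ultimately show "norm (complex_of_real (?g \<xi>) * cnj (?F \<xi>)) \<le> norm (?k * (LINT y|lborel. norm (w y)) * ?g \<xi>)"
          by (simp add: norm_mult mult.commute mult_left_mono)
      qed
    qed
  qed
  have step_a: "(LINT \<xi>|lborel. of_real (?g \<xi>) * (?F \<xi> * cnj (?F \<xi>)))
     = of_real ?k * (LINT y|lborel. w y * (LINT \<xi>|lborel. ph y \<xi> * \<phi>1 \<xi>))"
  proof -
    have "(LINT \<xi>|lborel. of_real (?g \<xi>) * (?F \<xi> * cnj (?F \<xi>)))
       = (LINT \<xi>|lborel. of_real ?k * (\<phi>1 \<xi> * (LINT y|lborel. ph y \<xi> * w y)))"
      unfolding fourier_L1_alt[of w] \<phi>1_def by (simp add: ac_simps)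
    also have "\<dots> = of_real ?k * (LINT \<xi>|lborel. \<phi>1 \<xi> * (LINT y|lborel. ph y \<xi> * w y))"
      by simp
    also have "\<dots> = of_real ?k * (LINT y|lborel. w y * (LINT \<xi>|lborel. ph y \<xi> * \<phi>1 \<xi>))"
      using duality[OF \<phi>1i w] by (rule arg_cong)
    finally show ?thesis .
  qed
  have step_b: "(LINT \<xi>|lborel. ph y \<xi> * \<phi>1 \<xi>) = of_real ?k * (LINT x|lborel. cnj (w x) * of_real (Gr \<epsilon> (x - y)))" for y
  proof -
    define \<phi>2 where "\<phi>2 \<xi> = of_real (?g \<xi>) * ph (- y) \<xi>" for \<xi>
    have \<phi>2i: "integrable lborel \<phi>2" unfolding \<phi>2_def
      by (rule Bochner_Integration.integrable_bound[OF gi]) (auto simp: norm_mult)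
    have "(LINT \<xi>|lborel. ph y \<xi> * \<phi>1 \<xi>) = (LINT \<xi>|lborel. cnj (\<phi>2 \<xi> * ?F \<xi>))"
      unfolding \<phi>1_def \<phi>2_def
      by (rule Bochner_Integration.integral_cong) (auto simp: exp_cnj ac_simps)
    also have "\<dots> = cnj (LINT \<xi>|lborel. \<phi>2 \<xi> * ?F \<xi>)"
      by (rule Bochner_Integration.integral_cnj)
    also have "(LINT \<xi>|lborel. \<phi>2 \<xi> * ?F \<xi>) = of_real ?k * (LINT \<xi>|lborel. \<phi>2 \<xi> * (LINT x|lborel. ph x \<xi> * w x))"
    proof -
      have "(\<lambda>\<xi>. \<phi>2 \<xi> * ?F \<xi>) = (\<lambda>\<xi>. of_real ?k * (\<phi>2 \<xi> * (LINT x|lborel. ph x \<xi> * w x)))"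
        unfolding fourier_L1_alt[of w] by (simp add: fun_eq_iff ac_simps)
      then show ?thesis by simp
    qed
    also have "(LINT \<xi>|lborel. \<phi>2 \<xi> * (LINT x|lborel. ph x \<xi> * w x)) = (LINT x|lborel. w x * (LINT \<xi>|lborel. ph x \<xi> * \<phi>2 \<xi>))"
      by (rule duality[OF \<phi>2i w])
    also have "\<dots> = (LINT x|lborel. w x * of_real (Gr \<epsilon> (x - y)))"
    proof (rule Bochner_Integration.integral_cong[OF refl])
      fix x
      have "(LINT \<xi>|lborel. ph x \<xi> * \<phi>2 \<xi>) = (LINT \<xi>|lborel. of_real (?g \<xi>) * ph \<xi> (x - y))"
        unfolding \<phi>2_def
        by (rule Bochner_Integration.integral_cong[OF refl]) (simp add: exp_add[symmetric] inner_diff_right inner_commute algebra_simps)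
      also have "\<dots> = of_real (Gr \<epsilon> (x - y))"
        unfolding Gr_def by (rule gauss_ft(1)[OF e])
      finally show "w x * (LINT \<xi>|lborel. ph x \<xi> * \<phi>2 \<xi>) = w x * of_real (Gr \<epsilon> (x - y))" by simp
    qed
    finally show ?thesis by (simp flip: Bochner_Integration.integral_cnj)
  qed
  have "(LINT y|lborel. w y * (LINT \<xi>|lborel. ph y \<xi> * \<phi>1 \<xi>))
     = (LINT y|lborel. of_real ?k * (w y * (LINT x|lborel. cnj (w x) * of_real (Gr \<epsilon> (x - y)))))"
    by (rule Bochner_Integration.integral_cong[OF refl]) (simp only: step_b mult.left_commute)
  also have "\<dots> = of_real ?k * (LINT y|lborel. w y * (LINT x|lborel. cnj (w x) * of_real (Gr \<epsilon> (x - y))))"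
    by (rule integral_mult_right_zero)
  finally show ?thesis
    using step_a by (simp add: power2_eq_square)
qed


lemma nn_integral_affine:
  fixes f :: "'a::euclidean_space \<Rightarrow> ennreal"
  assumes [measurable]: "f \<in> borel_measurable borel" and c: "c \<noteq> 0"
  shows "(\<integral>\<^sup>+x. f x \<partial>lborel) = ennreal (\<bar>c\<bar>^DIM('a)) * (\<integral>\<^sup>+x. f (t + c *\<^sub>R x) \<partial>lborel)"
  by (subst lborel_affine[OF c, of t])
     (simp add: nn_integral_density nn_integral_distr nn_integral_cmult)

lemma Gr_meas[measurable]: "Gr \<epsilon> \<in> borel_measurable borel"
  unfolding Gr_def[abs_def] by measurable

lemma Gr_integral:
  assumes e: "(\<epsilon>::real) > 0"
  shows "(\<integral>\<^sup>+z. ennreal (Gr \<epsilon> (z::'a::euclidean_space)) \<partial>lborel) = ennreal ((2*pi)^DIM('a))"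
proof -
  define e' where "e' = 1 / (4 * \<epsilon>)"
  have e': "e' > 0" using e by (simp add: e'_def)
  have gi: "integrable lborel (\<lambda>x::'a. exp (- e' * (norm x)\<^sup>2))" by (rule gauss_int_nd[OF e'])
  have "complex_of_real (LINT x|lborel. exp (- e' * (norm (x::'a))\<^sup>2))
      = (LINT x|lborel. of_real (exp (- e' * (norm (x::'a))\<^sup>2)) * ph x 0)"
    by simp
  also have "\<dots> = of_real ((sqrt (pi / e')) ^ DIM('a) * exp (- (norm (0::'a))\<^sup>2 / (4 * e')))"
    by (rule gauss_ft(1)[OF e'])
  finally have I: "(LINT x|lborel. exp (- e' * (norm (x::'a))\<^sup>2)) = (sqrt (pi / e')) ^ DIM('a)"
    by (simp only: of_real_eq_iff) simp
  have eqG: "(\<lambda>z::'a. Gr \<epsilon> z) = (\<lambda>z. (sqrt (pi / \<epsilon>)) ^ DIM('a) * exp (- e' * (norm z)\<^sup>2))"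
    unfolding Gr_def e'_def by (simp add: fun_eq_iff)
  have Gi: "integrable lborel (\<lambda>z::'a. Gr \<epsilon> z)" unfolding eqG using gi by simp
  have "(LINT z|lborel. Gr \<epsilon> (z::'a)) = (sqrt (pi / \<epsilon>)) ^ DIM('a) * (sqrt (pi / e')) ^ DIM('a)"
    unfolding eqG using I by simp
  also have "\<dots> = (sqrt (pi / \<epsilon>) * sqrt (pi / e')) ^ DIM('a)" by (simp add: power_mult_distrib)
  also have "sqrt (pi / \<epsilon>) * sqrt (pi / e') = 2 * pi"
  proof -
    have h: "sqrt (pi / \<epsilon>) * sqrt (pi / e') = sqrt ((2 * pi)^2)"
      unfolding real_sqrt_mult[symmetric] e'_def using e by (simp add: field_simps power2_eq_square)
    have s: "sqrt ((2 * pi)^2) = 2 * pi" by (rule real_sqrt_unique) auto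
    show ?thesis by (simp only: h s)
  qed
  finally have "(LINT z|lborel. Gr \<epsilon> (z::'a)) = (2 * pi) ^ DIM('a)" .
  moreover have "(\<integral>\<^sup>+z. ennreal (Gr \<epsilon> (z::'a)) \<partial>lborel) = ennreal (LINT z|lborel. Gr \<epsilon> (z::'a))"
    by (rule nn_integral_eq_integral[OF Gi]) (simp add: Gr_nonneg[OF e])
  ultimately show ?thesis by simp
qed

lemma Gr_integral_shift:
  fixes x y :: "'a::euclidean_space"
  assumes e: "(\<epsilon>::real) > 0"
  shows "(\<integral>\<^sup>+x. ennreal (Gr \<epsilon> (x - y)) \<partial>lborel) = ennreal ((2*pi)^DIM('a))"
    and "(\<integral>\<^sup>+y. ennreal (Gr \<epsilon> (x - y)) \<partial>lborel) = ennreal ((2*pi)^DIM('a))"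
proof -
  have m: "(\<lambda>z::'a. ennreal (Gr \<epsilon> z)) \<in> borel_measurable borel" by measurable
  show "(\<integral>\<^sup>+x. ennreal (Gr \<epsilon> (x - y)) \<partial>lborel) = ennreal ((2*pi)^DIM('a))"
    using nn_integral_affine[OF m, of 1 "- y"] Gr_integral[OF e, where 'a='a] by simp
  show "(\<integral>\<^sup>+y. ennreal (Gr \<epsilon> (x - y)) \<partial>lborel) = ennreal ((2*pi)^DIM('a))"
    using nn_integral_affine[OF m, of "-1" x] Gr_integral[OF e, where 'a='a] by simp
qed


lemma kernel_bound:
  fixes w :: "'a::euclidean_space \<Rightarrow> complex"
  assumes wm[measurable]: "w \<in> borel_measurable borel" and e: "\<epsilon> > 0"
  shows "(\<integral>\<^sup>+y. ennreal (cmod (w y)) * (\<integral>\<^sup>+x. ennreal (cmod (w x) * Gr \<epsilon> (x - y)) \<partial>lborel) \<partial>lborel)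
     \<le> ennreal ((2*pi)^DIM('a)) * (\<integral>\<^sup>+x. ennreal ((cmod (w x))\<^sup>2) \<partial>lborel)"
proof -
  define C where "C = ennreal ((2*pi)^DIM('a))"
  define p where "p x = ennreal ((cmod (w x))\<^sup>2 / 2)" for x
  have pm[measurable]: "p \<in> borel_measurable borel" unfolding p_def[abs_def] by measurable
  have G0: "Gr \<epsilon> z \<ge> 0" for z :: 'a using Gr_nonneg[OF e] .
  have "(\<integral>\<^sup>+y. ennreal (cmod (w y)) * (\<integral>\<^sup>+x. ennreal (cmod (w x) * Gr \<epsilon> (x - y)) \<partial>lborel) \<partial>lborel)
      = (\<integral>\<^sup>+y. (\<integral>\<^sup>+x. ennreal (cmod (w y)) * ennreal (cmod (w x) * Gr \<epsilon> (x - y)) \<partial>lborel) \<partial>lborel)"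
    by (subst nn_integral_cmult) auto
  also have "\<dots> \<le> (\<integral>\<^sup>+y. (\<integral>\<^sup>+x. p y * ennreal (Gr \<epsilon> (x - y)) + p x * ennreal (Gr \<epsilon> (x - y)) \<partial>lborel) \<partial>lborel)"
  proof (intro nn_integral_mono)
    fix x y :: 'a
    have "cmod (w y) * (cmod (w x) * Gr \<epsilon> (x - y)) \<le> ((cmod (w y))\<^sup>2 / 2 + (cmod (w x))\<^sup>2 / 2) * Gr \<epsilon> (x - y)"
    proof -
      have "cmod (w y) * cmod (w x) \<le> (cmod (w y))\<^sup>2 / 2 + (cmod (w x))\<^sup>2 / 2"
        using zero_le_power2[of "cmod (w y) - cmod (w x)"] by (simp add: power2_eq_square algebra_simps)
      then show ?thesis using G0[of "x - y"] by (simp add: mult.assoc[symmetric] mult_right_mono)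
    qed
    then show "ennreal (cmod (w y)) * ennreal (cmod (w x) * Gr \<epsilon> (x - y)) \<le> p y * ennreal (Gr \<epsilon> (x - y)) + p x * ennreal (Gr \<epsilon> (x - y))"
      unfolding p_def using G0[of "x - y"]
      by (simp add: ennreal_mult[symmetric] ennreal_plus[symmetric] distrib_right del: ennreal_plus)
  qed
  also have "\<dots> = (\<integral>\<^sup>+y. (\<integral>\<^sup>+x. p y * ennreal (Gr \<epsilon> (x - y)) \<partial>lborel) + (\<integral>\<^sup>+x. p x * ennreal (Gr \<epsilon> (x - y)) \<partial>lborel) \<partial>lborel)"
    by (intro nn_integral_cong nn_integral_add) auto
  also have "\<dots> = (\<integral>\<^sup>+y. (\<integral>\<^sup>+x. p y * ennreal (Gr \<epsilon> (x - y)) \<partial>lborel) \<partial>lborel) + (\<integral>\<^sup>+y. (\<integral>\<^sup>+x. p x * ennreal (Gr \<epsilon> (x - y)) \<partial>lborel) \<partial>lborel)"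
    by (rule nn_integral_add) auto
  also have "(\<integral>\<^sup>+y. (\<integral>\<^sup>+x. p y * ennreal (Gr \<epsilon> (x - y)) \<partial>lborel) \<partial>lborel) = (\<integral>\<^sup>+y. p y * C \<partial>lborel)"
    by (intro nn_integral_cong) (simp add: nn_integral_cmult Gr_integral_shift(1)[OF e] C_def)
  also have "(\<integral>\<^sup>+y. (\<integral>\<^sup>+x. p x * ennreal (Gr \<epsilon> (x - y)) \<partial>lborel) \<partial>lborel) = (\<integral>\<^sup>+x. (\<integral>\<^sup>+y. p x * ennreal (Gr \<epsilon> (x - y)) \<partial>lborel) \<partial>lborel)"
    by (rule lborel_pair.Fubini') measurable
  also have "\<dots> = (\<integral>\<^sup>+x. p x * C \<partial>lborel)"
    by (intro nn_integral_cong) (simp add: nn_integral_cmult Gr_integral_shift(2)[OF e] C_def)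
  also have "(\<integral>\<^sup>+y. p y * C \<partial>lborel) + (\<integral>\<^sup>+x. p x * C \<partial>lborel) = C * ((\<integral>\<^sup>+x. p x \<partial>lborel) + (\<integral>\<^sup>+x. p x \<partial>lborel))"
    using nn_integral_multc[of p lborel C] pm by (simp add: distrib_left mult.commute)
  also have "(\<integral>\<^sup>+x. p x \<partial>lborel) + (\<integral>\<^sup>+x. p x \<partial>lborel) = (\<integral>\<^sup>+x. p x + p x \<partial>lborel)"
    by (rule nn_integral_add[symmetric]) auto
  also have "(\<lambda>x. p x + p x) = (\<lambda>x. ennreal ((cmod (w x))\<^sup>2))"
    unfolding p_def by (simp add: fun_eq_iff ennreal_plus[symmetric] del: ennreal_plus)
  finally show ?thesis unfolding C_def .
qed


lemma norm_integral_le_nn: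
  fixes f :: "'b \<Rightarrow> 'c::{banach, second_countable_topology}"
  shows "ennreal (norm (integral\<^sup>L M f)) \<le> (\<integral>\<^sup>+x. ennreal (norm (f x)) \<partial>M)"
proof (cases "integrable M f")
  case True then show ?thesis by (rule integral_norm_bound_ennreal)
next
  case False then show ?thesis by (simp add: not_integrable_integral_eq)
qed

lemma kap_pos: "kap TYPE('a::euclidean_space) > 0"
  unfolding kap_def by simp

lemma kap_C: "kap TYPE('a::euclidean_space) * (2 * pi) ^ DIM('a) = 1"
  unfolding kap_def by (simp add: powr_minus powr_realpow field_simps)

lemma weighted_bound:
  fixes w :: "'a::euclidean_space \<Rightarrow> complex"
  assumes w: "integrable lborel w" and e: "\<epsilon> > 0"
  shows "(\<integral>\<^sup>+\<xi>. ennreal (exp (- \<epsilon> * (norm \<xi>)\<^sup>2) * (cmod (fourier_L1 w \<xi>))\<^sup>2) \<partial>lborel)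
     \<le> ennreal (kap TYPE('a)) * (\<integral>\<^sup>+x. ennreal ((cmod (w x))\<^sup>2) \<partial>lborel)"
proof -
  let ?k = "kap TYPE('a)"
  let ?g = "\<lambda>\<xi>::'a. exp (- \<epsilon> * (norm \<xi>)\<^sup>2)"
  let ?F = "fourier_L1 w"
  let ?M = "?k * (LINT y|lborel. norm (w y))"
  have wm[measurable]: "w \<in> borel_measurable borel" using w by (simp add: borel_measurable_integrable)
  have Fm[measurable]: "?F \<in> borel_measurable borel" by (rule fourier_meas[OF wm])
  have gi: "integrable lborel ?g" by (rule gauss_int_nd[OF e])
  have M0: "?M \<ge> 0" using kap_pos[where 'a='a] by simp
  have int: "integrable lborel (\<lambda>\<xi>. ?g \<xi> * (cmod (?F \<xi>))\<^sup>2)"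
  proof (rule Bochner_Integration.integrable_bound)
    show "integrable lborel (\<lambda>\<xi>. ?M^2 * ?g \<xi>)" using gi by simp
    show "(\<lambda>\<xi>. ?g \<xi> * (cmod (?F \<xi>))\<^sup>2) \<in> borel_measurable lborel" by measurable
    show "AE \<xi> in lborel. norm (?g \<xi> * (cmod (?F \<xi>))\<^sup>2) \<le> norm (?M^2 * ?g \<xi>)"
    proof (intro AE_I2)
      fix \<xi>
      have "(cmod (?F \<xi>))\<^sup>2 \<le> ?M^2" using fourier_bound[of w \<xi>] by (intro power_mono) auto
      then show "norm (?g \<xi> * (cmod (?F \<xi>))\<^sup>2) \<le> norm (?M^2 * ?g \<xi>)"
        by (simp add: mult.commute mult_left_mono)
    qed
  qed
  define Q where "Q = (LINT y|lborel. w y * (LINT x|lborel. cnj (w x) * of_real (Gr \<epsilon> (x - y))))"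
  have "complex_of_real (LINT \<xi>|lborel. ?g \<xi> * (cmod (?F \<xi>))\<^sup>2)
      = (LINT \<xi>|lborel. of_real (?g \<xi>) * (?F \<xi> * cnj (?F \<xi>)))"
  proof -
    have "complex_of_real (LINT \<xi>|lborel. ?g \<xi> * (cmod (?F \<xi>))\<^sup>2) = (LINT \<xi>|lborel. complex_of_real (?g \<xi> * (cmod (?F \<xi>))\<^sup>2))"
      by (rule Bochner_Integration.integral_of_real[OF int, symmetric])
    also have "\<dots> = (LINT \<xi>|lborel. of_real (?g \<xi>) * (?F \<xi> * cnj (?F \<xi>)))"
      by (rule Bochner_Integration.integral_cong[OF refl]) (simp only: of_real_mult complex_norm_square)
    finally show ?thesis .
  qed
  also have "\<dots> = of_real ?k ^ 2 * Q" unfolding Q_def by (rule J_identity[OF e w])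
  finally have JQ: "(LINT \<xi>|lborel. ?g \<xi> * (cmod (?F \<xi>))\<^sup>2) = ?k^2 * norm Q"
  proof -
    assume h: "complex_of_real (LINT \<xi>|lborel. ?g \<xi> * (cmod (?F \<xi>))\<^sup>2) = of_real ?k ^ 2 * Q"
    have "(LINT \<xi>|lborel. ?g \<xi> * (cmod (?F \<xi>))\<^sup>2) \<ge> 0" by (intro integral_nonneg_AE) auto
    then have "(LINT \<xi>|lborel. ?g \<xi> * (cmod (?F \<xi>))\<^sup>2) = norm (complex_of_real (LINT \<xi>|lborel. ?g \<xi> * (cmod (?F \<xi>))\<^sup>2))"
      by simp
    also have "\<dots> = ?k^2 * norm Q" unfolding h by (simp add: norm_mult norm_power)
    finally show ?thesis .
  qed
  have Qb: "ennreal (norm Q) \<le> ennreal ((2*pi)^DIM('a)) * (\<integral>\<^sup>+x. ennreal ((cmod (w x))\<^sup>2) \<partial>lborel)"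
  proof -
    have "ennreal (norm Q) \<le> (\<integral>\<^sup>+y. ennreal (norm (w y * (LINT x|lborel. cnj (w x) * of_real (Gr \<epsilon> (x - y))))) \<partial>lborel)"
      unfolding Q_def by (rule norm_integral_le_nn)
    also have "\<dots> \<le> (\<integral>\<^sup>+y. ennreal (cmod (w y)) * (\<integral>\<^sup>+x. ennreal (cmod (w x) * Gr \<epsilon> (x - y)) \<partial>lborel) \<partial>lborel)"
    proof (intro nn_integral_mono)
      fix y
      have "ennreal (norm (LINT x|lborel. cnj (w x) * of_real (Gr \<epsilon> (x - y)))) \<le> (\<integral>\<^sup>+x. ennreal (norm (cnj (w x) * of_real (Gr \<epsilon> (x - y)))) \<partial>lborel)"
        by (rule norm_integral_le_nn)
      also have "\<dots> = (\<integral>\<^sup>+x. ennreal (cmod (w x) * Gr \<epsilon> (x - y)) \<partial>lborel)"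
        by (intro nn_integral_cong) (simp add: norm_mult abs_of_nonneg[OF Gr_nonneg[OF e]])
      finally have "ennreal (norm (LINT x|lborel. cnj (w x) * of_real (Gr \<epsilon> (x - y)))) \<le> (\<integral>\<^sup>+x. ennreal (cmod (w x) * Gr \<epsilon> (x - y)) \<partial>lborel)" .
      then show "ennreal (norm (w y * (LINT x|lborel. cnj (w x) * of_real (Gr \<epsilon> (x - y))))) \<le> ennreal (cmod (w y)) * (\<integral>\<^sup>+x. ennreal (cmod (w x) * Gr \<epsilon> (x - y)) \<partial>lborel)"
        by (simp add: norm_mult ennreal_mult mult_left_mono)
    qed
    also have "\<dots> \<le> ennreal ((2*pi)^DIM('a)) * (\<integral>\<^sup>+x. ennreal ((cmod (w x))\<^sup>2) \<partial>lborel)"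
      by (rule kernel_bound[OF wm e])
    finally show ?thesis .
  qed
  have "(\<integral>\<^sup>+\<xi>. ennreal (?g \<xi> * (cmod (?F \<xi>))\<^sup>2) \<partial>lborel) = ennreal (LINT \<xi>|lborel. ?g \<xi> * (cmod (?F \<xi>))\<^sup>2)"
    by (rule nn_integral_eq_integral[OF int]) auto
  also have "\<dots> = ennreal (?k^2) * ennreal (norm Q)" unfolding JQ by (simp add: ennreal_mult)
  also have "\<dots> \<le> ennreal (?k^2) * (ennreal ((2*pi)^DIM('a)) * (\<integral>\<^sup>+x. ennreal ((cmod (w x))\<^sup>2) \<partial>lborel))"
    by (rule mult_left_mono[OF Qb]) simp
  also have "\<dots> = ennreal (?k^2 * (2*pi)^DIM('a)) * (\<integral>\<^sup>+x. ennreal ((cmod (w x))\<^sup>2) \<partial>lborel)"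
    by (simp add: ennreal_mult mult.assoc)
  also have "?k^2 * (2*pi)^DIM('a) = ?k" using kap_C[where 'a='a] by (simp add: power2_eq_square mult.assoc)
  finally show ?thesis .
qed


lemma plancherel_le:
  fixes w :: "'a::euclidean_space \<Rightarrow> complex"
  assumes w: "integrable lborel w"
  shows "(\<integral>\<^sup>+\<xi>. ennreal ((cmod (fourier_L1 w \<xi>))\<^sup>2) \<partial>lborel)
     \<le> ennreal (kap TYPE('a)) * (\<integral>\<^sup>+x. ennreal ((cmod (w x))\<^sup>2) \<partial>lborel)"
proof -
  let ?F = "fourier_L1 w"
  have wm[measurable]: "w \<in> borel_measurable borel" using w by (simp add: borel_measurable_integrable)
  have Fm[measurable]: "?F \<in> borel_measurable borel" by (rule fourier_meas[OF wm])
  define f where "f k \<xi> = ennreal (exp (- (1 / real (Suc k)) * (norm \<xi>)\<^sup>2) * (cmod (?F \<xi>))\<^sup>2)" for k \<xi>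
  have fm: "f k \<in> borel_measurable lborel" for k unfolding f_def[abs_def] by measurable
  have inc: "incseq f"
  proof (rule incseq_SucI, rule le_funI)
    fix k and \<xi> :: 'a
    have "- (1 / real (Suc k)) * (norm \<xi>)\<^sup>2 \<le> - (1 / real (Suc (Suc k))) * (norm \<xi>)\<^sup>2"
      by (intro mult_right_mono) (auto simp: frac_le)
    then show "f k \<xi> \<le> f (Suc k) \<xi>" unfolding f_def
      by (intro ennreal_leI mult_right_mono) auto
  qed
  have sup: "(SUP k. f k \<xi>) = ennreal ((cmod (?F \<xi>))\<^sup>2)" for \<xi> :: 'a
  proof -
    have l1: "(\<lambda>k. 1 / real (Suc k)) \<longlonglongrightarrow> 0"
      using LIMSEQ_inverse_real_of_nat by (simp add: inverse_eq_divide)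
    have "(\<lambda>k. exp (- (1 / real (Suc k)) * (norm \<xi>)\<^sup>2) * (cmod (?F \<xi>))\<^sup>2) \<longlonglongrightarrow> exp (- 0 * (norm \<xi>)\<^sup>2) * (cmod (?F \<xi>))\<^sup>2"
      by (intro tendsto_intros l1)
    then have "(\<lambda>k. f k \<xi>) \<longlonglongrightarrow> ennreal ((cmod (?F \<xi>))\<^sup>2)"
      unfolding f_def by (intro tendsto_ennrealI) simp
    moreover have "(\<lambda>k. f k \<xi>) \<longlonglongrightarrow> (SUP k. f k \<xi>)"
      by (rule LIMSEQ_SUP) (use inc in \<open>auto simp: incseq_def le_fun_def\<close>)
    ultimately show ?thesis using LIMSEQ_unique by blast
  qed
  have "(\<integral>\<^sup>+\<xi>. ennreal ((cmod (?F \<xi>))\<^sup>2) \<partial>lborel) = (\<integral>\<^sup>+\<xi>. (SUP k. f k \<xi>) \<partial>lborel)"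
    by (simp add: sup)
  also have "\<dots> = (SUP k. \<integral>\<^sup>+\<xi>. f k \<xi> \<partial>lborel)"
    by (rule nn_integral_monotone_convergence_SUP[OF inc fm])
  also have "\<dots> \<le> ennreal (kap TYPE('a)) * (\<integral>\<^sup>+x. ennreal ((cmod (w x))\<^sup>2) \<partial>lborel)"
  proof (rule SUP_least)
    fix k
    show "(\<integral>\<^sup>+\<xi>. f k \<xi> \<partial>lborel) \<le> ennreal (kap TYPE('a)) * (\<integral>\<^sup>+x. ennreal ((cmod (w x))\<^sup>2) \<partial>lborel)"
      unfolding f_def by (rule weighted_bound[OF w]) simp
  qed
  finally show ?thesis .
qed


lemma ball_bound:
  fixes u v :: "'a::euclidean_space \<Rightarrow> complex"
  assumes u: "square_integrable u" and fv: "is_fourier_L2 u v" and b: "l2norm_sq u = \<beta>" and bpos: "\<beta> > 0"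
  shows "(LINT \<xi>:cball 0 K|lborel. (cmod (v \<xi>))^2) \<le> kap TYPE('a) * \<beta>"
proof -
  let ?k = "kap TYPE('a)"
  define S where "S = cball (0::'a) K"
  have vsq: "square_integrable v" using fv unfolding is_fourier_L2_def by blast
  have vm[measurable]: "v \<in> borel_measurable borel" using vsq by (simp add: square_integrable_def)
  have um[measurable]: "u \<in> borel_measurable borel" using u by (simp add: square_integrable_def)
  have v2: "integrable lborel (\<lambda>x. (cmod (v x))^2)" using vsq by (simp add: square_integrable_def)
  have u2: "integrable lborel (\<lambda>x. (cmod (u x))^2)" using u by (simp add: square_integrable_def)
  have Sm[measurable]: "S \<in> sets borel" unfolding S_def by simp
  define I where "I = (LINT \<xi>|lborel. indicator S \<xi> * (cmod (v \<xi>))^2)"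
  have I_eq: "(LINT \<xi>:cball 0 K|lborel. (cmod (v \<xi>))^2) = I"
    unfolding I_def S_def set_lebesgue_integral_def by simp
  have Ii: "integrable lborel (\<lambda>\<xi>. indicator S \<xi> * (cmod (v \<xi>))^2)"
    by (rule Bochner_Integration.integrable_bound[OF v2]) (auto simp: indicator_def)
  have I0: "I \<ge> 0" unfolding I_def by (intro integral_nonneg_AE) auto
  define w where "w \<xi> = indicator S \<xi> * cnj (v \<xi>)" for \<xi>
  have wm[measurable]: "w \<in> borel_measurable borel" unfolding w_def[abs_def]
    by (intro borel_measurable_times borel_measurable_continuous_on[OF _ vm]) (auto intro: continuous_intros)
  have wi: "integrable lborel w"
  proof (rule Bochner_Integration.integrable_bound[OF sq_int_loc[OF vsq, of S]])
    show "S \<in> sets lborel" by simp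
    show "emeasure lborel S < \<infinity>" using emeasure_bounded_finite[of S] unfolding S_def by simp
    show "w \<in> borel_measurable lborel" by simp
    show "AE x in lborel. norm (w x) \<le> norm (indicator S x * cmod (v x))"
      by (auto simp: w_def indicator_def)
  qed
  have wsq: "square_integrable w" unfolding square_integrable_def
  proof
    show "w \<in> borel_measurable lborel" by simp
    show "integrable lborel (\<lambda>x. (cmod (w x))^2)"
    proof (rule Bochner_Integration.integrable_bound[OF v2])
      show "(\<lambda>x. (cmod (w x))^2) \<in> borel_measurable lborel" by measurable
      show "AE x in lborel. norm ((cmod (w x))^2) \<le> norm ((cmod (v x))^2)" by (auto simp: w_def indicator_def)
    qed
  qed
  have "(LINT \<xi>|lborel. v \<xi> * w \<xi>) = (LINT x|lborel. u x * fourier_L1 w x)"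
    using fv wi wsq unfolding is_fourier_L2_def by blast
  moreover have "(LINT \<xi>|lborel. v \<xi> * w \<xi>) = of_real I"
  proof -
    have "(LINT \<xi>|lborel. v \<xi> * w \<xi>) = (LINT \<xi>|lborel. complex_of_real (indicator S \<xi> * (cmod (v \<xi>))^2))"
      by (rule Bochner_Integration.integral_cong[OF refl])
         (auto simp: w_def indicator_def complex_norm_square[symmetric])
    also have "\<dots> = of_real I" unfolding I_def by (rule Bochner_Integration.integral_of_real[OF Ii])
    finally show ?thesis .
  qed
  ultimately have I_norm: "I = norm (LINT x|lborel. u x * fourier_L1 w x)" using I0 by (metis norm_of_real abs_of_nonneg)
  have Fm[measurable]: "fourier_L1 w \<in> borel_measurable borel" by (rule fourier_meas[OF wm])
  have nu: "(\<integral>\<^sup>+x. ennreal ((cmod (u x))^2) \<partial>lborel) = ennreal \<beta>"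
    using nn_integral_eq_integral[OF u2] b unfolding l2norm_sq_def by simp
  have nw: "(\<integral>\<^sup>+x. ennreal ((cmod (w x))^2) \<partial>lborel) = ennreal I"
  proof -
    have "(\<integral>\<^sup>+x. ennreal ((cmod (w x))^2) \<partial>lborel) = (\<integral>\<^sup>+x. ennreal (indicator S x * (cmod (v x))^2) \<partial>lborel)"
      by (intro nn_integral_cong) (simp add: w_def indicator_def)
    also have "\<dots> = ennreal I" unfolding I_def by (rule nn_integral_eq_integral[OF Ii]) auto
    finally show ?thesis .
  qed
  have nF: "(\<integral>\<^sup>+x. ennreal ((cmod (fourier_L1 w x))^2) \<partial>lborel) \<le> ennreal (?k * I)"
    using plancherel_le[OF wi] nw kap_pos[where 'a='a] I0 by (simp add: ennreal_mult)
  have key: "I \<le> t / 2 * \<beta> + 1 / (2 * t) * (?k * I)" if t: "t > 0" for t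
  proof -
    have "ennreal I \<le> (\<integral>\<^sup>+x. ennreal (norm (u x * fourier_L1 w x)) \<partial>lborel)"
      unfolding I_norm by (rule norm_integral_le_nn)
    also have "\<dots> \<le> (\<integral>\<^sup>+x. ennreal (t / 2) * ennreal ((cmod (u x))^2) + ennreal (1 / (2 * t)) * ennreal ((cmod (fourier_L1 w x))^2) \<partial>lborel)"
    proof (intro nn_integral_mono)
      fix x
      have "cmod (u x) * cmod (fourier_L1 w x) \<le> t / 2 * (cmod (u x))^2 + 1 / (2 * t) * (cmod (fourier_L1 w x))^2"
      proof -
        have "0 \<le> (t * cmod (u x) - cmod (fourier_L1 w x))^2" by simp
        then have "2 * t * (cmod (u x) * cmod (fourier_L1 w x)) \<le> t^2 * (cmod (u x))^2 + (cmod (fourier_L1 w x))^2"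
          by (simp add: power2_eq_square algebra_simps)
        then have "(cmod (u x) * cmod (fourier_L1 w x)) \<le> (t^2 * (cmod (u x))^2 + (cmod (fourier_L1 w x))^2) / (2 * t)"
          using t by (simp add: field_simps)
        also have "\<dots> = t / 2 * (cmod (u x))^2 + 1 / (2 * t) * (cmod (fourier_L1 w x))^2"
          using t by (simp add: field_simps power2_eq_square)
        finally show ?thesis .
      qed
      then show "ennreal (norm (u x * fourier_L1 w x)) \<le> ennreal (t / 2) * ennreal ((cmod (u x))^2) + ennreal (1 / (2 * t)) * ennreal ((cmod (fourier_L1 w x))^2)"
        using t by (simp add: norm_mult ennreal_mult[symmetric] ennreal_plus[symmetric] del: ennreal_plus)
    qed
    also have "\<dots> = ennreal (t / 2) * (\<integral>\<^sup>+x. ennreal ((cmod (u x))^2) \<partial>lborel) + ennreal (1 / (2 * t)) * (\<integral>\<^sup>+x. ennreal ((cmod (fourier_L1 w x))^2) \<partial>lborel)"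
      by (subst nn_integral_add) (auto simp: nn_integral_cmult)
    also have "\<dots> \<le> ennreal (t / 2) * ennreal \<beta> + ennreal (1 / (2 * t)) * ennreal (?k * I)"
      unfolding nu by (intro add_mono mult_left_mono nF) auto
    also have "\<dots> = ennreal (t / 2 * \<beta> + 1 / (2 * t) * (?k * I))"
      using t bpos I0 kap_pos[where 'a='a] by (simp add: ennreal_mult[symmetric] ennreal_plus[symmetric] del: ennreal_plus)
    finally show ?thesis using t bpos I0 kap_pos[where 'a='a] by (subst (asm) ennreal_le_iff) auto
  qed
  show ?thesis
  proof (cases "I = 0")
    case True then show ?thesis unfolding I_eq using kap_pos[where 'a='a] bpos by simp
  next
    case False
    then have Ipos: "I > 0" using I0 by simp
    define t where "t = sqrt (?k * I / \<beta>)"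
    have t: "t > 0" unfolding t_def using Ipos bpos kap_pos[where 'a='a] by simp
    have t2: "t^2 = ?k * I / \<beta>" unfolding t_def using Ipos bpos kap_pos[where 'a='a] by simp
    have eq: "1 / (2 * t) * (?k * I) = t / 2 * \<beta>"
      using t t2 bpos by (simp add: field_simps power2_eq_square)
    have "I \<le> t / 2 * \<beta> + t / 2 * \<beta>" using key[OF t] by (simp only: eq)
    then have "I \<le> t * \<beta>" by (simp add: mult.commute)
    then have "I * I \<le> (t * \<beta>) * (t * \<beta>)" using Ipos by (intro mult_mono) auto
    also have "\<dots> = ?k * I * \<beta>" using t2 bpos by (simp add: power2_eq_square field_simps)
    finally have "I * I \<le> (?k * \<beta>) * I" by (simp add: ac_simps)
    then have "I \<le> ?k * \<beta>" using Ipos by simp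
    then show ?thesis unfolding I_eq .
  qed
qed


lemma kap_le1: "kap TYPE('a::euclidean_space) \<le> 1"
proof -
  have "1 \<le> (2 * pi) powr real DIM('a)" by (rule ge_one_powr_ge_zero) (use pi_gt3 in auto)
  then show ?thesis unfolding kap_def by (simp add: powr_minus field_simps)
qed

theorem proposition1:
  fixes K \<beta> \<mu> :: real
  assumes "K > 0" and "\<beta> > 0" and "\<mu> > 0"
    and "\<forall>u :: 'a::euclidean_space \<Rightarrow> complex. H1 u \<and> l2norm_sq u = \<beta> \<longrightarrow>
           l2norm_sq u \<le> grad_norm_sq u / K^2 + \<mu>"
  shows "\<forall>(u :: 'a \<Rightarrow> complex) v. H1 u \<and> l2norm_sq u = \<beta> \<and> is_fourier_L2 u v \<longrightarrow>
           \<mu> \<ge> (LINT \<xi>:cball 0 K|lborel. (cmod (v \<xi>))^2)"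
proof (intro allI impI)
  fix u v :: "'a \<Rightarrow> complex"
  assume h: "H1 u \<and> l2norm_sq u = \<beta> \<and> is_fourier_L2 u v"
  have sq: "square_integrable u" using h unfolding H1_def by blast
  have bm: "\<beta> \<le> \<mu>" using mu_ge_beta[OF assms(1) assms(4)] h by blast
  have "(LINT \<xi>:cball 0 K|lborel. (cmod (v \<xi>))^2) \<le> kap TYPE('a) * \<beta>"
    using ball_bound[OF sq _ _ assms(2)] h by blast
  also have "\<dots> \<le> 1 * \<beta>" using kap_le1[where 'a='a] assms(2) by (intro mult_right_mono) auto
  finally show "\<mu> \<ge> (LINT \<xi>:cball 0 K|lborel. (cmod (v \<xi>))^2)" using bm by simp
qed


end
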